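(* Assume the setting in the context (deterministic $\Phi$ with $\operatorname{rank}(\widehat\Phi_1)=k$). Let $\theta_1\le\dots\le\theta_k$ be the principal angles between $\mathcal R(Q)$ and $\mathcal R(U_k)$, and $\varphi_1\le\dots\le\varphi_k$ the principal angles between $\mathcal R(P)$ and $\mathcal R(V_k)$. Then for $i=1,\dots,k$, $$\cos\theta_i\ge\frac{1}{\sqrt{1+\delta_i^{4q+4}\|\widehat\Phi_2\widehat\Phi_1^\dagger\|_2^2}},\qquad \tan\theta_i\le\delta_i^{2q+2}\|\widehat\Phi_2\widehat\Phi_1^\dagger\|_2,$$ $$\cos\varphi_i\ge\frac{1}{\sqrt{1+\delta_i^{4q+2}\|\widehat\Phi_2\widehat\Phi_1^\dagger\|_2^2}},\qquad \tan\varphi_i\le\delta_i^{2q+1}\|\widehat\Phi_2\widehat\Phi_1^\dagger\|_2.$$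
   Context: Let $A\in\mathbb R^{m\times n}$ with $m\ge n$ have full SVD $A=U\Sigma V^T$, with singular values $\sigma_1\ge\sigma_2\ge\dots\ge\sigma_n\ge 0$. Fix an integer $k\ge1$ with $\sigma_k>0$ (the paper regards $A$ as having numerical rank $k$, i.e. $\sigma_k$ well separated from $\sigma_{k+1}$). Write $U=[U_k\ U_\perp]$ with $U_k\in\mathbb R^{m\times k}$ the first $k$ left singular vectors $u_1,\dots,u_k$, $U_\perp\in\mathbb R^{m\times(m-k)}$ the rest; $V=[V_k\ V_\perp]$ with $V_k\in\mathbb R^{n\times k}$ the first $k$ right singular vectors $v_1,\dots,v_k$; $\Sigma_k=\mathrm{diag}(\sigma_1,\dots,\sigma_k)$ and $\Sigma_\perp$ the remaining diagonal block of $\Sigma$ containing $\sigma_{k+1},\dots,\sigma_n$ (so $\|\Sigma_\perp\|_2=\sigma_{k+1}$, $\|\Sigma_\perp\|_F=(\sum_{i>k}\sigma_i^2)^{1/2}$). The notation $\|\cdot\|_{2,F}$ means the statement holds for both the spectral and Frobenius norm. Let $p\ge1$ be an oversampling integer, $d=k+p<n$, and $q\ge0$ an integer (power-iteration parameter). RU-QLP (Randomized Unpivoted QLP): given $\Phi\in\mathbb R^{m\times d}$, let $\bar P\in\mathbb R^{n\times d}$ have orthonormal columns spanning the range of $(A^TA)^qA^T\Phi$ (assumed of rank $d$); compute the thin unpivoted QR factorization $A\bar P=QR$ with $Q\in\mathbb R^{m\times d}$ having orthonormal columns and $R\in\mathbb R^{d\times d}$ upper triangular; compute the thin unpivoted QR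 factorization $R^T=\widetilde P\widetilde R$; set $P=\bar P\widetilde P\in\mathbb R^{n\times d}$ and $L=\widetilde R^T$ (lower triangular), giving $\hat A=QLP^T$. Partition $R=\begin{bmatrix}R_{11}&R_{12}\\0&R_{22}\end{bmatrix}$ and $L=\begin{bmatrix}L_{11}&0\\L_{21}&L_{22}\end{bmatrix}$ with $R_{11},L_{11}\in\mathbb R^{k\times k}$. Define $\widehat\Phi_1=U_k^T\Phi\in\mathbb R^{k\times d}$ and $\widehat\Phi_2=U_\perp^T\Phi\in\mathbb R^{(m-k)\times d}$, assume $\widehat\Phi_1$ has rank $k$, and let $\dagger$ denote the Moore–Penrose inverse. Set $\delta_i=\sigma_{k+1}/\sigma_i$ for $i=1,\dots,k$ and $\gamma=\sigma_n/\sigma_1$. Principal angles between a subspace $\mathcal X$ and a $k$-dimensional subspace $\mathcal Y$ (with $\dim\mathcal X\ge k$) are the $k$ canonical angles $0\le\alpha_1\le\dots\le\alpha_k\le\pi/2$; for orthonormal bases $X$, $Y$, the values $\sin\alpha_i$ are the singular values of $(I-XX^T)Y$. *)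

theory Defs
  imports Complex_Main "Jordan_Normal_Form.DL_Rank"
begin

definition vnorm :: "real vec \<Rightarrow> real" where
  "vnorm x = sqrt (scalar_prod x x)"

definition spec_norm :: "real mat \<Rightarrow> real" where
  "spec_norm M = Sup {vnorm (M *\<^sub>v x) | x. x \<in> carrier_vec (dim_col M) \<and> vnorm x = 1}"

definition orthonormal_cols :: "real mat \<Rightarrow> bool" where
  "orthonormal_cols X \<longleftrightarrow> transpose_mat X * X = 1\<^sub>m (dim_col X)"

definition col_range :: "real mat \<Rightarrow> real vec set" where
  "col_range M = {M *\<^sub>v x | x. x \<in> carrier_vec (dim_col M)}"

definition pinv :: "real mat \<Rightarrow> real mat" where
  "pinv A = (THE X. X \<in> carrier_mat (dim_col A) (dim_row A) \<and>
     A * X * A = A \<and> X * A * X = X \<and>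
     transpose_mat (A * X) = A * X \<and> transpose_mat (X * A) = X * A)"

(* s 0, ..., s (r-1) are the singular values of M (r = number of columns of M),
   listed in some order: M^T M = W diag(s^2) W^T with W orthogonal *)
definition singular_values :: "real mat \<Rightarrow> (nat \<Rightarrow> real) \<Rightarrow> bool" where
  "singular_values M s \<longleftrightarrow> (let r = dim_col M in
     (\<forall>i<r. s i \<ge> 0) \<and>
     (\<exists>W. W \<in> carrier_mat r r \<and> transpose_mat W * W = 1\<^sub>m r \<and>
        transpose_mat M * M = W * mat r r (\<lambda>(i,j). if i = j then (s i)\<^sup>2 else 0) * transpose_mat W))"

(* alpha 0 <= ... <= alpha (k-1) are the principal angles between R(X) and the
   k-dimensional subspace R(Y), where X, Y are orthonormal bases (Y has k columns):
   the sin alpha_i are the singular values of (I - X X^T) Y *)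
definition principal_angles :: "real mat \<Rightarrow> real mat \<Rightarrow> (nat \<Rightarrow> real) \<Rightarrow> bool" where
  "principal_angles X Y alpha \<longleftrightarrow>
     (\<forall>i<dim_col Y. 0 \<le> alpha i \<and> alpha i \<le> pi / 2) \<and>
     (\<forall>i j. i \<le> j \<and> j < dim_col Y \<longrightarrow> alpha i \<le> alpha j) \<and>
     singular_values ((1\<^sub>m (dim_row X) - X * transpose_mat X) * Y) (\<lambda>i. sin (alpha i))"

definition first_cols :: "real mat \<Rightarrow> nat \<Rightarrow> real mat" where
  "first_cols M k = mat (dim_row M) k (\<lambda>(i,j). M $$ (i,j))"

definition last_cols :: "real mat \<Rightarrow> nat \<Rightarrow> real mat" where
  "last_cols M k = mat (dim_row M) (dim_col M - k) (\<lambda>(i,j). M $$ (i, j + k))"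

end

theory Submission
  imports Defs
begin

lemma orth_dot:
  assumes X: "X \<in> carrier_mat N r" and XX: "transpose_mat X * X = 1\<^sub>m r"
    and a: "a \<in> carrier_vec r" and b: "b \<in> carrier_vec r"
  shows "(X *\<^sub>v a) \<bullet> (X *\<^sub>v b) = a \<bullet> (b :: real vec)"
proof -
  have "(X *\<^sub>v a) \<bullet> (X *\<^sub>v b) = (transpose_mat X *\<^sub>v (X *\<^sub>v a)) \<bullet> b"
    using transpose_vec_mult_scalar[OF X b, of "X *\<^sub>v a"] X a by simp
  also have "transpose_mat X *\<^sub>v (X *\<^sub>v a) = (transpose_mat X * X) *\<^sub>v a"
    using X a by (metis assoc_mult_mat_vec transpose_carrier_mat)
  also have "\<dots> = a" using XX a by simp
  finally show ?thesis .
qed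

lemma orth_right:
  assumes Om: "Om \<in> carrier_mat N N" and OO: "transpose_mat Om * Om = 1\<^sub>m N"
  shows "Om * transpose_mat Om = (1\<^sub>m N :: real mat)"
  using mat_mult_left_right_inverse[OF _ Om OO] Om by simp

lemma proj_le:
  assumes X: "X \<in> carrier_mat N r" and XX: "transpose_mat X * X = 1\<^sub>m r"
    and u: "u \<in> carrier_vec N" and h: "h \<in> carrier_vec r"
  shows "((1\<^sub>m N - X * transpose_mat X) *\<^sub>v u) \<bullet> ((1\<^sub>m N - X * transpose_mat X) *\<^sub>v u)
         \<le> (u - X *\<^sub>v h) \<bullet> (u - X *\<^sub>v (h :: real vec))"
proof -
  define v where "v = u - X *\<^sub>v h"
  have v: "v \<in> carrier_vec N" using u h X by (simp add: v_def)
  define a where "a = transpose_mat X *\<^sub>v v"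
  have a: "a \<in> carrier_vec r" using X v by (simp add: a_def)
  have Xt: "transpose_mat X \<in> carrier_mat r N" using X by simp
  have XXt: "X * transpose_mat X \<in> carrier_mat N N" using X by simp
  have e1: "(1\<^sub>m N - X * transpose_mat X) *\<^sub>v u = u - X *\<^sub>v (transpose_mat X *\<^sub>v u)"
    using u X minus_mult_distrib_mat_vec[OF one_carrier_mat XXt u] by simp
  have "X *\<^sub>v (transpose_mat X *\<^sub>v (X *\<^sub>v h)) = X *\<^sub>v h"
  proof -
    have "transpose_mat X *\<^sub>v (X *\<^sub>v h) = (transpose_mat X * X) *\<^sub>v h"
      using X h by (metis assoc_mult_mat_vec transpose_carrier_mat)
    then show ?thesis using XX h by simp
  qed
  then have e2: "u - X *\<^sub>v (transpose_mat X *\<^sub>v u) = v - X *\<^sub>v a"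
    unfolding v_def a_def using X u h
    by (simp add: mult_minus_distrib_mat_vec) (intro eq_vecI; auto)
  have Xa: "X *\<^sub>v a \<in> carrier_vec N" using X a by simp
  have "(v - X *\<^sub>v a) \<bullet> (v - X *\<^sub>v a) = v \<bullet> v - 2 * (v \<bullet> (X *\<^sub>v a)) + (X *\<^sub>v a) \<bullet> (X *\<^sub>v a)"
    using v Xa
    by (simp add: minus_scalar_prod_distrib[of _ N] scalar_prod_minus_distrib[of _ N]
        comm_scalar_prod[of "X *\<^sub>v a" N v])
  also have "v \<bullet> (X *\<^sub>v a) = a \<bullet> a"
    using transpose_vec_mult_scalar[OF X a v] unfolding a_def by simp
  also have "(X *\<^sub>v a) \<bullet> (X *\<^sub>v a) = a \<bullet> a" using orth_dot[OF X XX a a] .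
  finally have "(v - X *\<^sub>v a) \<bullet> (v - X *\<^sub>v a) = v \<bullet> v - a \<bullet> a" by simp
  moreover have "a \<bullet> a \<ge> 0" by (simp add: scalar_prod_def sum_nonneg)
  ultimately show ?thesis using e1 e2 v_def by simp
qed

lemma sum_if_less:
  fixes i k :: nat
  assumes "i \<le> k"
  shows "(\<Sum>l=0..<k. if l < i then f l else 0) = (\<Sum>l=0..<i. (f l :: real))"
proof -
  show ?thesis using assms by (intro sum.mono_neutral_cong_right) auto
qed

lemma kernel_vec:
  assumes W: "W \<in> carrier_mat k k" and ik: "i < k"
  shows "\<exists>x. x \<in> carrier_vec k \<and> x \<bullet> x > 0 \<and> (\<forall>j. i < j \<longrightarrow> j < k \<longrightarrow> x $ j = 0)
     \<and> (\<forall>a<i. (transpose_mat W *\<^sub>v x) $ a = (0::real))"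
proof -
  define C where "C = mat (Suc i) (Suc i) (\<lambda>(a,l). if a < i then W $$ (l,a) else (0::real))"
  have C: "C \<in> carrier_mat (Suc i) (Suc i)" by (simp add: C_def)
  have "transpose_mat C *\<^sub>v unit_vec (Suc i) i = 0\<^sub>v (Suc i)"
  proof (rule eq_vecI)
    fix l assume "l < dim_vec (0\<^sub>v (Suc i) :: real vec)"
    then have l: "l < Suc i" by simp
    have "(transpose_mat C *\<^sub>v unit_vec (Suc i) i) $ l = (\<Sum>a=0..<Suc i. C $$ (a,l) * (if a = i then 1 else 0))"
      using l C by (simp add: scalar_prod_def unit_vec_def)
    also have "\<dots> = C $$ (i, l)" by (simp add: sum.delta' if_distrib cong: if_cong)
    also have "\<dots> = 0" using l by (simp add: C_def)
    finally show "(transpose_mat C *\<^sub>v unit_vec (Suc i) i) $ l = 0\<^sub>v (Suc i) $ l" using l by simp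
  qed (use C in simp)
  moreover have "unit_vec (Suc i) i \<in> carrier_vec (Suc i)" by simp
  moreover have "unit_vec (Suc i) i \<noteq> (0\<^sub>v (Suc i) :: real vec)"
  proof
    assume "unit_vec (Suc i) i = (0\<^sub>v (Suc i) :: real vec)"
    then have "unit_vec (Suc i) i $ i = (0\<^sub>v (Suc i) :: real vec) $ i" by simp
    then show False by simp
  qed
  ultimately have "\<exists>v. v \<in> carrier_vec (Suc i) \<and> v \<noteq> 0\<^sub>v (Suc i) \<and> transpose_mat C *\<^sub>v v = 0\<^sub>v (Suc i)"
    by blast
  then have "det (transpose_mat C) = 0"
    using det_0_iff_vec_prod_zero_field[of "transpose_mat C" "Suc i"] C by simp
  then have "det C = 0" using C by (simp add: det_transpose)
  then obtain v where v: "v \<in> carrier_vec (Suc i)" "v \<noteq> 0\<^sub>v (Suc i)" "C *\<^sub>v v = 0\<^sub>v (Suc i)"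
    using det_0_iff_vec_prod_zero_field[OF C] by auto
  obtain j0 where j0: "j0 < Suc i" "v $ j0 \<noteq> 0"
    using v(1,2) by (metis carrier_vecD eq_vecI index_zero_vec(1,2))
  define x where "x = vec k (\<lambda>j. if j < Suc i then v $ j else 0)"
  have x: "x \<in> carrier_vec k" by (simp add: x_def)
  have "x $ j0 * x $ j0 \<le> (\<Sum>j=0..<k. x $ j * x $ j)"
    by (rule member_le_sum) (use j0 ik in auto)
  moreover have "x \<bullet> x = (\<Sum>j=0..<k. x $ j * x $ j)" by (simp add: scalar_prod_def x_def)
  moreover have "x $ j0 * x $ j0 = v $ j0 * v $ j0" using j0 ik by (simp add: x_def)
  moreover have "v $ j0 * v $ j0 > 0" using j0(2) by (metis not_real_square_gt_zero)
  ultimately have "x \<bullet> x > 0" by linarith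
  moreover have "\<forall>j. i < j \<longrightarrow> j < k \<longrightarrow> x $ j = 0" by (simp add: x_def)
  moreover have "\<forall>a<i. (transpose_mat W *\<^sub>v x) $ a = 0"
  proof (intro allI impI)
    fix a assume a: "a < i"
    have "(transpose_mat W *\<^sub>v x) $ a = (\<Sum>l=0..<k. W $$ (l,a) * (if l < Suc i then v $ l else 0))"
      using a ik W by (simp add: scalar_prod_def x_def)
    also have "\<dots> = (\<Sum>l=0..<k. if l < Suc i then W $$ (l,a) * v $ l else 0)"
      by (rule sum.cong) auto
    also have "\<dots> = (\<Sum>l=0..<Suc i. W $$ (l,a) * v $ l)"
      using ik by (intro sum_if_less) simp
    also have "\<dots> = (C *\<^sub>v v) $ a"
      using a v(1) by (simp add: C_def scalar_prod_def)
    also have "\<dots> = 0" using v(3) a by simp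
    finally show "(transpose_mat W *\<^sub>v x) $ a = 0" .
  qed
  ultimately show ?thesis using x by blast
qed

lemma comb_sq:
  assumes p: "p \<in> carrier_vec N" and w: "w \<in> carrier_vec N" and pw: "p \<bullet> w = (0::real)"
  shows "(p - \<beta> \<cdot>\<^sub>v (p + w)) \<bullet> (p - \<beta> \<cdot>\<^sub>v (p + w)) = (1-\<beta>)^2 * (p \<bullet> p) + \<beta>^2 * (w \<bullet> w)"
proof -
  have "(p - \<beta> \<cdot>\<^sub>v (p + w)) \<bullet> (p - \<beta> \<cdot>\<^sub>v (p + w))
     = (\<Sum>i=0..<N. (1-\<beta>)^2 * (p $ i * p $ i) - 2 * ((1-\<beta>) * \<beta>) * (p $ i * w $ i) + \<beta>^2 * (w $ i * w $ i))"
    using p w by (simp add: scalar_prod_def power2_eq_square algebra_simps)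
  also have "\<dots> = (1-\<beta>)^2 * (p \<bullet> p) - 2 * ((1-\<beta>) * \<beta>) * (p \<bullet> w) + \<beta>^2 * (w \<bullet> w)"
    using p w by (simp add: scalar_prod_def sum.distrib sum_subtractf sum_distrib_left)
  finally show ?thesis using pw by simp
qed

lemma real_ineq:
  fixes a b t :: real
  assumes a: "a > 0" and b: "b \<ge> 0" and bt: "b \<le> t^2 * a"
  shows "(1 - a/(a+b))^2 * a + (a/(a+b))^2 * b \<le> a * (t^2 / (1 + t^2))"
proof -
  have ab: "a + b > 0" using a b by simp
  have e: "1 - a/(a+b) = b/(a+b)" using ab by (simp add: field_simps)
  have "(b/(a+b))^2 * a + (a/(a+b))^2 * b = (a * b * (a + b)) / ((a+b) * (a+b))"
    using ab by (simp add: power_divide power2_eq_square add_divide_distrib[symmetric] algebra_simps)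
  also have "\<dots> = a * b / (a + b)" using ab by simp
  finally have "(1 - a/(a+b))^2 * a + (a/(a+b))^2 * b = a * b / (a + b)" using e by simp
  also have "\<dots> \<le> a * (t^2 / (1 + t^2))"
  proof -
    have t1: "1 + t^2 > 0" by (simp add: add_pos_nonneg)
    have "b * (1 + t^2) \<le> t^2 * (a + b)" using bt by (simp add: algebra_simps)
    then have "b / (a + b) \<le> t^2 / (1 + t^2)" using ab t1 by (simp add: divide_simps mult.commute)
    then have "a * (b / (a + b)) \<le> a * (t^2 / (1 + t^2))" using a by (intro mult_left_mono) auto
    then show ?thesis by simp
  qed
  finally show ?thesis .
qed

lemma angle_bound:
  fixes X Y :: "real mat" and \<alpha> :: "nat \<Rightarrow> real" and t :: real
  assumes X: "X \<in> carrier_mat N r" and XX: "transpose_mat X * X = 1\<^sub>m r"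
    and Y: "Y \<in> carrier_mat N k" and YY: "transpose_mat Y * Y = 1\<^sub>m k"
    and pa: "principal_angles X Y \<alpha>" and ik: "i < k"
    and H: "\<And>x. x \<in> carrier_vec k \<Longrightarrow> (\<forall>j. i < j \<longrightarrow> j < k \<longrightarrow> x $ j = 0) \<Longrightarrow>
          \<exists>h w. h \<in> carrier_vec r \<and> w \<in> carrier_vec N \<and> X *\<^sub>v h = Y *\<^sub>v x + w \<and>
                (Y *\<^sub>v x) \<bullet> w = 0 \<and> w \<bullet> w \<le> t^2 * (x \<bullet> x)"
  shows "(sin (\<alpha> i))^2 \<le> t^2 / (1 + t^2)"
proof -
  define M where "M = (1\<^sub>m N - X * transpose_mat X) * Y"
  have P: "1\<^sub>m N - X * transpose_mat X \<in> carrier_mat N N" using X by (intro minus_carrier_mat) auto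
  have M: "M \<in> carrier_mat N k" using P Y by (simp add: M_def)
  have rX: "dim_row X = N" and cY: "dim_col Y = k" using X Y by auto
  have ang: "\<forall>j<k. 0 \<le> \<alpha> j \<and> \<alpha> j \<le> pi / 2"
    and mono: "\<forall>i j. i \<le> j \<and> j < k \<longrightarrow> \<alpha> i \<le> \<alpha> j"
    and sv: "singular_values M (\<lambda>i. sin (\<alpha> i))"
    using pa unfolding principal_angles_def M_def rX cY by auto
  define D where "D = mat k k (\<lambda>(i,j). if i = j then (sin (\<alpha> i))\<^sup>2 else (0::real))"
  have D: "D \<in> carrier_mat k k" by (simp add: D_def)
  obtain W where W: "W \<in> carrier_mat k k" and WW: "transpose_mat W * W = 1\<^sub>m k"
    and MM: "transpose_mat M * M = W * D * transpose_mat W"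
    using sv M unfolding singular_values_def D_def Let_def by auto
  have WWt: "W * transpose_mat W = 1\<^sub>m k" using orth_right[OF W WW] .
  have Wt: "transpose_mat W \<in> carrier_mat k k" using W by simp
  obtain x where x: "x \<in> carrier_vec k" and xpos: "x \<bullet> x > 0"
    and xz: "\<forall>j. i < j \<longrightarrow> j < k \<longrightarrow> x $ j = 0" and yz: "\<forall>a<i. (transpose_mat W *\<^sub>v x) $ a = 0"
    using kernel_vec[OF W ik] by blast
  obtain h w where h: "h \<in> carrier_vec r" and w: "w \<in> carrier_vec N"
    and hw: "X *\<^sub>v h = Y *\<^sub>v x + w" and orth: "(Y *\<^sub>v x) \<bullet> w = 0" and wb: "w \<bullet> w \<le> t^2 * (x \<bullet> x)"
    using H[OF x xz] by blast
  define y where "y = transpose_mat W *\<^sub>v x"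
  have y: "y \<in> carrier_vec k" using Wt x by (simp add: y_def)
  have Mx: "M *\<^sub>v x \<in> carrier_vec N" using M x by simp
  have "(M *\<^sub>v x) \<bullet> (M *\<^sub>v x) = (transpose_mat M *\<^sub>v (M *\<^sub>v x)) \<bullet> x"
    using transpose_vec_mult_scalar[OF M x Mx] by simp
  also have "transpose_mat M *\<^sub>v (M *\<^sub>v x) = (W * D * transpose_mat W) *\<^sub>v x"
    using M x MM by (metis assoc_mult_mat_vec transpose_carrier_mat)
  also have "\<dots> = (W * D) *\<^sub>v y"
    unfolding y_def by (rule assoc_mult_mat_vec[OF mult_carrier_mat[OF W D] Wt x])
  also have "\<dots> = W *\<^sub>v (D *\<^sub>v y)"
    by (rule assoc_mult_mat_vec[OF W D y])
  also have "(W *\<^sub>v (D *\<^sub>v y)) \<bullet> x = (D *\<^sub>v y) \<bullet> y"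
    using transpose_vec_mult_scalar[OF Wt x, of "D *\<^sub>v y"] D y by (simp add: y_def)
  also have "\<dots> = (\<Sum>j=0..<k. (sin (\<alpha> j))\<^sup>2 * (y $ j * y $ j))"
  proof -
    have "\<And>j. j < k \<Longrightarrow> (D *\<^sub>v y) $ j = (sin (\<alpha> j))\<^sup>2 * y $ j"
    proof -
      fix j assume j: "j < k"
      have "(D *\<^sub>v y) $ j = (\<Sum>l=0..<k. (if j = l then (sin (\<alpha> j))\<^sup>2 else 0) * y $ l)"
        using j y by (simp add: D_def scalar_prod_def)
      also have "\<dots> = (\<Sum>l=0..<k. if l = j then (sin (\<alpha> j))\<^sup>2 * y $ j else 0)"
        by (rule sum.cong) auto
      also have "\<dots> = (sin (\<alpha> j))\<^sup>2 * y $ j" using j by simp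
      finally show "(D *\<^sub>v y) $ j = (sin (\<alpha> j))\<^sup>2 * y $ j" .
    qed
    then show ?thesis using y D by (simp add: scalar_prod_def mult.assoc)
  qed
  finally have e1: "(M *\<^sub>v x) \<bullet> (M *\<^sub>v x) = (\<Sum>j=0..<k. (sin (\<alpha> j))\<^sup>2 * (y $ j * y $ j))" .
  have "(\<Sum>j=0..<k. (sin (\<alpha> i))\<^sup>2 * (y $ j * y $ j)) \<le> (\<Sum>j=0..<k. (sin (\<alpha> j))\<^sup>2 * (y $ j * y $ j))"
  proof (rule sum_mono)
    fix j assume j: "j \<in> {0..<k}"
    show "(sin (\<alpha> i))\<^sup>2 * (y $ j * y $ j) \<le> (sin (\<alpha> j))\<^sup>2 * (y $ j * y $ j)"
    proof (cases "j < i")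
      case True then show ?thesis using yz by (simp add: y_def)
    next
      case False
      have "0 \<le> \<alpha> i" "\<alpha> i \<le> \<alpha> j" "\<alpha> j \<le> pi/2" using ang mono j False ik by auto
      then have "sin (\<alpha> i) \<le> sin (\<alpha> j)" "0 \<le> sin (\<alpha> i)"
        by (auto intro!: sin_monotone_2pi_le sin_ge_zero)
      then have "(sin (\<alpha> i))\<^sup>2 \<le> (sin (\<alpha> j))\<^sup>2" by (simp add: power_mono)
      then show ?thesis by (intro mult_right_mono) auto
    qed
  qed
  moreover have "(\<Sum>j=0..<k. y $ j * y $ j) = x \<bullet> x"
  proof -
    have "(\<Sum>j=0..<k. y $ j * y $ j) = y \<bullet> y" using y by (simp add: scalar_prod_def)
    also have "\<dots> = x \<bullet> x" unfolding y_def
      using orth_dot[OF Wt _ x x] WWt by simp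
    finally show ?thesis .
  qed
  ultimately have lower: "(sin (\<alpha> i))\<^sup>2 * (x \<bullet> x) \<le> (M *\<^sub>v x) \<bullet> (M *\<^sub>v x)"
    using e1 by (simp add: sum_distrib_left[symmetric])
  define p where "p = Y *\<^sub>v x"
  have p: "p \<in> carrier_vec N" using Y x by (simp add: p_def)
  have pp: "p \<bullet> p = x \<bullet> x" using orth_dot[OF Y YY x x] by (simp add: p_def)
  define \<beta> where "\<beta> = (x \<bullet> x) / (x \<bullet> x + w \<bullet> w)"
  have "M *\<^sub>v x = (1\<^sub>m N - X * transpose_mat X) *\<^sub>v p"
    using P Y x by (simp add: M_def p_def)
  then have "(M *\<^sub>v x) \<bullet> (M *\<^sub>v x) \<le> (p - X *\<^sub>v (\<beta> \<cdot>\<^sub>v h)) \<bullet> (p - X *\<^sub>v (\<beta> \<cdot>\<^sub>v h))"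
    using proj_le[OF X XX p, of "\<beta> \<cdot>\<^sub>v h"] h by simp
  also have "X *\<^sub>v (\<beta> \<cdot>\<^sub>v h) = \<beta> \<cdot>\<^sub>v (p + w)"
    using X h hw by (simp add: mult_mat_vec p_def)
  also have "(p - \<beta> \<cdot>\<^sub>v (p + w)) \<bullet> (p - \<beta> \<cdot>\<^sub>v (p + w)) = (1-\<beta>)^2 * (p \<bullet> p) + \<beta>^2 * (w \<bullet> w)"
    using comb_sq[OF p w] orth by (simp add: p_def)
  also have "\<dots> \<le> (x \<bullet> x) * (t^2 / (1 + t^2))"
    unfolding pp \<beta>_def
    by (rule real_ineq[OF xpos _ wb]) (simp add: scalar_prod_def sum_nonneg)
  finally have "(sin (\<alpha> i))\<^sup>2 * (x \<bullet> x) \<le> (x \<bullet> x) * (t^2 / (1 + t^2))" using lower by simp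
  then have "(x \<bullet> x) * (sin (\<alpha> i))\<^sup>2 \<le> (x \<bullet> x) * (t^2 / (1 + t^2))" by (simp add: mult.commute)
  then show ?thesis using xpos mult_le_cancel_left_pos by blast
qed

lemma trig_bound:
  fixes a t :: real
  assumes a0: "0 \<le> a" and a1: "a \<le> pi/2" and t: "t \<ge> 0"
    and s: "(sin a)^2 \<le> t^2 / (1 + t^2)"
  shows "cos a \<ge> 1 / sqrt (1 + t^2) \<and> tan a \<le> t"
proof -
  have t1: "1 + t^2 > 0" by (simp add: add_pos_nonneg)
  have s2: "(sin a)^2 * (1 + t^2) \<le> t^2" using s t1 by (simp add: pos_le_divide_eq)
  have c2: "(cos a)^2 = 1 - (sin a)^2" by (simp add: cos_squared_eq)
  have cpos: "cos a \<ge> 0" using a0 a1 by (intro cos_ge_zero) auto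
  have "(cos a)^2 * (1 + t^2) \<ge> 1"
  proof -
    define S where "S = (sin a)^2"
    define T where "T = t^2"
    have "(cos a)^2 * (1 + t^2) = (1 - S) * (1 + T)" using c2 by (simp add: S_def T_def)
    also have "\<dots> = 1 + T - S * (1 + T)" by (simp add: algebra_simps)
    finally show ?thesis using s2 by (simp add: S_def T_def)
  qed
  then have c2b: "(cos a)^2 \<ge> 1 / (1 + t^2)" using t1 by (simp add: pos_divide_le_eq)
  then have "sqrt ((cos a)^2) \<ge> sqrt (1 / (1 + t^2))" by (rule real_sqrt_le_mono)
  then have cb: "cos a \<ge> 1 / sqrt (1 + t^2)" using cpos by (simp add: real_sqrt_divide)
  have "1 / sqrt (1 + t^2) > 0" using t1 by simp
  then have cgt: "cos a > 0" using cb by linarith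
  have spos: "sin a \<ge> 0" using a0 a1 by (intro sin_ge_zero) auto
  have tpos: "tan a \<ge> 0" using spos cgt by (simp add: tan_def)
  have "(tan a)^2 = (sin a)^2 / (cos a)^2" by (simp add: tan_def power_divide)
  also have "\<dots> \<le> t^2"
  proof -
    have "(sin a)^2 \<le> t^2 * (cos a)^2"
    proof -
      define S where "S = (sin a)^2"
      define T where "T = t^2"
      have "t^2 * (cos a)^2 = T * (1 - S)" using c2 by (simp add: S_def T_def)
      also have "\<dots> = T - S * T" by (simp add: algebra_simps)
      finally show ?thesis using s2 by (simp add: S_def T_def algebra_simps)
    qed
    then show ?thesis using cgt by (simp add: pos_divide_le_eq)
  qed
  finally have "(tan a)^2 \<le> t^2" .
  then have "tan a \<le> t" using t by (rule power2_le_imp_le)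
  with cb show ?thesis by simp
qed

lemma sp_nonneg: "(x :: real vec) \<bullet> x \<ge> 0"
  by (simp add: scalar_prod_def sum_nonneg)

lemma vnorm_nonneg: "vnorm x \<ge> 0"
  by (simp add: vnorm_def sp_nonneg)

lemma vnorm_sq: "(vnorm x)^2 = x \<bullet> x"
  by (simp add: vnorm_def sp_nonneg)

lemma sp_zero: assumes "x \<in> carrier_vec n" "(x :: real vec) \<bullet> x = 0" shows "x = 0\<^sub>v n"
proof -
  have "(\<Sum>i=0..<n. x $ i * x $ i) = 0" using assms by (simp add: scalar_prod_def)
  then have "\<forall>i\<in>{0..<n}. x $ i * x $ i = 0"
    by (subst (asm) sum_nonneg_eq_0_iff) auto
  then show ?thesis using assms(1) by (intro eq_vecI) auto
qed

lemma vnorm_smult: "vnorm (c \<cdot>\<^sub>v y) = \<bar>c\<bar> * vnorm (y :: real vec)"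
proof -
  have "(c \<cdot>\<^sub>v y) \<bullet> (c \<cdot>\<^sub>v y) = c^2 * (y \<bullet> y)"
    by (simp add: scalar_prod_def sum_distrib_left power2_eq_square algebra_simps)
  then show ?thesis by (simp add: vnorm_def real_sqrt_mult)
qed

lemma entry_le_vnorm: assumes "j < dim_vec x" shows "\<bar>x $ j\<bar> \<le> vnorm (x :: real vec)"
proof -
  have "x $ j * x $ j \<le> (\<Sum>i=0..<dim_vec x. x $ i * x $ i)"
    by (rule member_le_sum) (use assms in auto)
  then have "(x $ j)^2 \<le> x \<bullet> x" by (simp add: scalar_prod_def power2_eq_square)
  then have "sqrt ((x $ j)^2) \<le> sqrt (x \<bullet> x)" by (rule real_sqrt_le_mono)
  then show ?thesis by (simp add: vnorm_def)
qed

lemma spec_bdd: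
  assumes M: "M \<in> carrier_mat a b"
  shows "bdd_above {vnorm (M *\<^sub>v x) | x. x \<in> carrier_vec (dim_col M) \<and> vnorm x = 1}"
proof -
  define Bt where "Bt = (\<Sum>i=0..<a. \<Sum>j=0..<b. \<bar>M $$ (i,j)\<bar>)"
  have "vnorm (M *\<^sub>v x) \<le> sqrt (real a * Bt^2)" if x: "x \<in> carrier_vec b" "vnorm x = 1" for x
  proof -
    have ent: "\<bar>(M *\<^sub>v x) $ i\<bar> \<le> Bt" if i: "i < a" for i
    proof -
      have "\<bar>(M *\<^sub>v x) $ i\<bar> = \<bar>\<Sum>j=0..<b. M $$ (i,j) * x $ j\<bar>"
        using M x i by (simp add: scalar_prod_def)
      also have "\<dots> \<le> (\<Sum>j=0..<b. \<bar>M $$ (i,j) * x $ j\<bar>)" by (rule sum_abs)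
      also have "\<dots> \<le> (\<Sum>j=0..<b. \<bar>M $$ (i,j)\<bar>)"
      proof (rule sum_mono)
        fix j assume j: "j \<in> {0..<b}"
        have "\<bar>x $ j\<bar> \<le> 1" using entry_le_vnorm[of j x] x j by simp
        then show "\<bar>M $$ (i,j) * x $ j\<bar> \<le> \<bar>M $$ (i,j)\<bar>"
          by (simp add: abs_mult mult_left_le)
      qed
      also have "\<dots> \<le> Bt" unfolding Bt_def
        by (rule member_le_sum[where f="\<lambda>i. \<Sum>j=0..<b. \<bar>M $$ (i,j)\<bar>"]) (use i in \<open>auto intro: sum_nonneg\<close>)
      finally show ?thesis .
    qed
    have "(M *\<^sub>v x) \<bullet> (M *\<^sub>v x) = (\<Sum>i=0..<a. ((M *\<^sub>v x) $ i)^2)"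
      using M by (simp add: scalar_prod_def power2_eq_square)
    also have "\<dots> \<le> (\<Sum>i=0..<a. Bt^2)"
    proof (rule sum_mono)
      fix i assume "i \<in> {0..<a}"
      then have "\<bar>(M *\<^sub>v x) $ i\<bar> \<le> Bt" using ent by auto
      then show "((M *\<^sub>v x) $ i)^2 \<le> Bt^2"
        by (metis abs_ge_zero order_trans power2_abs power_mono)
    qed
    also have "\<dots> = real a * Bt^2" by simp
    finally show ?thesis unfolding vnorm_def by (rule real_sqrt_le_mono)
  qed
  then show ?thesis using M unfolding bdd_above_def by auto
qed

lemma spec_norm_bound:
  assumes M: "M \<in> carrier_mat a b" and u: "u \<in> carrier_vec b"
  shows "vnorm (M *\<^sub>v u) \<le> spec_norm M * vnorm u"
proof (cases "vnorm u = 0")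
  case True
  then have "u \<bullet> u = 0" using vnorm_sq[of u] by simp
  then have "u = 0\<^sub>v b" using sp_zero u by blast
  then have "M *\<^sub>v u = 0\<^sub>v a" using M by auto
  then show ?thesis using True by (simp add: vnorm_def scalar_prod_def)
next
  case False
  then have np: "vnorm u > 0" using vnorm_nonneg[of u] by simp
  define u' where "u' = (1 / vnorm u) \<cdot>\<^sub>v u"
  have u': "u' \<in> carrier_vec (dim_col M)" using u M by (simp add: u'_def)
  have "vnorm u' = 1" using np by (simp add: u'_def vnorm_smult)
  then have "vnorm (M *\<^sub>v u') \<in> {vnorm (M *\<^sub>v x) | x. x \<in> carrier_vec (dim_col M) \<and> vnorm x = 1}"
    using u' by blast
  then have "vnorm (M *\<^sub>v u') \<le> spec_norm M"
    unfolding spec_norm_def by (rule cSup_upper[OF _ spec_bdd[OF M]])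
  moreover have "vnorm (M *\<^sub>v u') = vnorm (M *\<^sub>v u) / vnorm u"
    using M u np by (simp add: u'_def mult_mat_vec vnorm_smult)
  ultimately show ?thesis using np by (simp add: pos_divide_le_eq)
qed

lemma spec_norm_nonneg:
  assumes M: "M \<in> carrier_mat a b" and b: "b > 0"
  shows "spec_norm M \<ge> 0"
proof -
  have "unit_vec b 0 \<in> carrier_vec (dim_col M)" using M by simp
  moreover have "vnorm (unit_vec b 0) = 1"
    using b by (simp add: vnorm_def scalar_prod_def unit_vec_def sum.delta' if_distrib cong: if_cong)
  ultimately have "vnorm (M *\<^sub>v unit_vec b 0) \<in> {vnorm (M *\<^sub>v x) | x. x \<in> carrier_vec (dim_col M) \<and> vnorm x = 1}"
    by blast
  then have "vnorm (M *\<^sub>v unit_vec b 0) \<le> spec_norm M"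
    unfolding spec_norm_def by (rule cSup_upper[OF _ spec_bdd[OF M]])
  then show ?thesis using vnorm_nonneg order_trans by blast
qed

lemma spec_norm_sq:
  assumes M: "M \<in> carrier_mat a b" and u: "u \<in> carrier_vec b"
  shows "(M *\<^sub>v u) \<bullet> (M *\<^sub>v u) \<le> (spec_norm M)^2 * (u \<bullet> u)"
proof -
  have "vnorm (M *\<^sub>v u) \<le> spec_norm M * vnorm u" by (rule spec_norm_bound[OF M u])
  then have "(vnorm (M *\<^sub>v u))^2 \<le> (spec_norm M * vnorm u)^2"
    using vnorm_nonneg by (intro power_mono) auto
  then show ?thesis by (simp add: vnorm_sq power_mult_distrib)
qed

lemma (in vec_space) full_rank_no_left_kernel:
  assumes A: "A \<in> carrier_mat n nc" and r: "rank A = n" and v: "v \<in> carrier_vec n"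
    and Av: "transpose_mat A *\<^sub>v v = 0\<^sub>v nc"
  shows "v = 0\<^sub>v n"
proof (rule ccontr)
  assume vnz: "v \<noteq> 0\<^sub>v n"
  have "lin_indpt {}"
    by (metis (no_types) empty_subsetI fin_dim finite_basis_exists subset_li_is_li vec_vs vectorspace.basis_def)
  then obtain S where Sfin: "finite S" and Smax: "maximal S (\<lambda>T. T \<subseteq> set (cols A) \<and> lin_indpt T)"
    using maximal_exists_superset[of "set (cols A)" "(\<lambda>T. T \<subseteq> set (cols A) \<and> lin_indpt T)" "{}"]
    by auto
  have cardS: "card S = n" using rank_card_indpt[OF A Smax] r by simp
  have Ssub: "S \<subseteq> set (cols A)" and Sind: "lin_indpt S" using Smax unfolding maximal_def by auto
  obtain xs where xs: "set xs = S" "distinct xs" using finite_distinct_list[OF Sfin] by blast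
  have lxs: "length xs = n" using xs cardS distinct_card by fastforce
  have xsc: "set xs \<subseteq> carrier_vec n" using xs Ssub cols_dim A by blast
  define C where "C = mat_of_cols n xs"
  have C: "C \<in> carrier_mat n n" using lxs by (simp add: C_def) (metis mat_of_cols_carrier(1))
  have colsC: "cols C = xs" using xsc by (simp add: C_def)
  have "rank C = n" using lin_indpt_full_rank[OF C] colsC xs Sind by simp
  then have dC: "det C \<noteq> 0" using det_rank_iff[OF C] by simp
  have "transpose_mat C *\<^sub>v v = 0\<^sub>v n"
  proof (rule eq_vecI)
    fix j assume "j < dim_vec (0\<^sub>v n :: 'a vec)"
    then have j: "j < n" by simp
    have "xs ! j \<in> set (cols A)" using Ssub xs j lxs by (metis nth_mem subsetD)
    then obtain l where l: "l < nc" "xs ! j = col A l" using A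
      by (metis cols_length cols_nth in_set_conv_nth carrier_matD(2))
    have "(transpose_mat C *\<^sub>v v) $ j = col C j \<bullet> v" using C j by simp
    also have "col C j = xs ! j" using colsC j C by (metis cols_nth carrier_matD(2))
    also have "\<dots> \<bullet> v = (transpose_mat A *\<^sub>v v) $ l" using A l by simp
    also have "\<dots> = 0" using Av l by simp
    finally show "(transpose_mat C *\<^sub>v v) $ j = 0\<^sub>v n $ j" using j by simp
  qed (use C in simp)
  then have "det (transpose_mat C) = 0"
    using det_0_iff_vec_prod_zero_field[of "transpose_mat C" n] C v vnz by auto
  then show False using dC C by (simp add: det_transpose)
qed

lemma mp_unique:
  fixes A X Y :: "real mat"
  assumes A: "A \<in> carrier_mat a b" and X: "X \<in> carrier_mat b a" and Y: "Y \<in> carrier_mat b a"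
    and x1: "A * X * A = A" and x2: "X * A * X = X"
    and x3: "transpose_mat (A * X) = A * X" and x4: "transpose_mat (X * A) = X * A"
    and y1: "A * Y * A = A" and y2: "Y * A * Y = Y"
    and y3: "transpose_mat (A * Y) = A * Y" and y4: "transpose_mat (Y * A) = Y * A"
  shows "X = Y"
proof -
  have At: "transpose_mat A \<in> carrier_mat b a" using A by simp
  have Xt: "transpose_mat X \<in> carrier_mat a b" using X by simp
  have Yt: "transpose_mat Y \<in> carrier_mat a b" using Y by simp
  have h1: "transpose_mat X * transpose_mat A = A * X" using x3 transpose_mult[OF A X] by simp
  have h2: "transpose_mat Y * transpose_mat A = A * Y" using y3 transpose_mult[OF A Y] by simp
  have h3: "transpose_mat A * transpose_mat X = X * A" using x4 transpose_mult[OF X A] by simp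
  have h4: "transpose_mat A * transpose_mat Y = Y * A" using y4 transpose_mult[OF Y A] by simp
  have h5g: "transpose_mat A = transpose_mat A * transpose_mat Z * transpose_mat A"
    if Z: "Z \<in> carrier_mat b a" and z1: "A * Z * A = A" for Z
  proof -
    have Zt: "transpose_mat Z \<in> carrier_mat a b" using Z by simp
    have "transpose_mat A = transpose_mat (A * Z * A)" using z1 by simp
    also have "\<dots> = transpose_mat A * transpose_mat (A * Z)"
      using transpose_mult[OF mult_carrier_mat[OF A Z] A] by simp
    also have "\<dots> = transpose_mat A * (transpose_mat Z * transpose_mat A)"
      using transpose_mult[OF A Z] by simp
    finally show ?thesis using assoc_mult_mat[OF At Zt At] by simp
  qed
  have h5: "transpose_mat A = transpose_mat A * transpose_mat Y * transpose_mat A" using h5g[OF Y y1] .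
  have h6: "transpose_mat A = transpose_mat A * transpose_mat X * transpose_mat A" using h5g[OF X x1] .
  have XA: "X * A \<in> carrier_mat b b" using X A by simp
  have AY: "A * Y \<in> carrier_mat a a" using A Y by simp
  have "X = X * (A * X)" using x2 assoc_mult_mat[OF X A X] by simp
  also have "\<dots> = X * (transpose_mat X * transpose_mat A)" using h1 by simp
  also have "\<dots> = X * (transpose_mat X * (transpose_mat A * transpose_mat Y * transpose_mat A))"
    using h5 by simp
  also have "transpose_mat X * (transpose_mat A * transpose_mat Y * transpose_mat A)
      = (transpose_mat X * transpose_mat A) * (transpose_mat Y * transpose_mat A)"
    using assoc_mult_mat[OF At Yt At] assoc_mult_mat[OF Xt At mult_carrier_mat[OF Yt At]] by simp
  also have "X * ((transpose_mat X * transpose_mat A) * (transpose_mat Y * transpose_mat A)) = X * ((A * X) * (A * Y))"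
    using h1 h2 by simp
  also have "\<dots> = (X * A * X) * (A * Y)"
    using assoc_mult_mat[OF X A X] assoc_mult_mat[OF mult_carrier_mat[OF X A] X AY]
      assoc_mult_mat[OF X mult_carrier_mat[OF A X] AY] by simp
  also have "\<dots> = X * (A * Y)" using x2 by simp
  finally have eX: "X = X * (A * Y)" .
  have "Y = (Y * A) * Y" using y2 by simp
  also have "\<dots> = (transpose_mat A * transpose_mat Y) * Y" using h4 by simp
  also have "\<dots> = ((transpose_mat A * transpose_mat X * transpose_mat A) * transpose_mat Y) * Y"
    using h6 by simp
  also have "(transpose_mat A * transpose_mat X * transpose_mat A) * transpose_mat Y
     = (transpose_mat A * transpose_mat X) * (transpose_mat A * transpose_mat Y)"
    using assoc_mult_mat[OF mult_carrier_mat[OF At Xt] At Yt] by simp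
  also have "((transpose_mat A * transpose_mat X) * (transpose_mat A * transpose_mat Y)) * Y = ((X * A) * (Y * A)) * Y"
    using h3 h4 by simp
  also have "\<dots> = X * (A * (Y * A * Y))"
    using assoc_mult_mat[OF XA mult_carrier_mat[OF Y A] Y] assoc_mult_mat[OF Y A Y]
      assoc_mult_mat[OF X A mult_carrier_mat[OF Y A]] assoc_mult_mat[OF X A Y]
      assoc_mult_mat[OF X mult_carrier_mat[OF A Y] A] assoc_mult_mat[OF A Y A]
    by (metis assoc_mult_mat mult_carrier_mat X A Y)
  also have "\<dots> = X * (A * Y)" using y2 by simp
  finally have eY: "Y = X * (A * Y)" .
  show ?thesis using eX eY by simp
qed

lemma pinv_right_inverse:
  fixes F :: "real mat"
  assumes F: "F \<in> carrier_mat k d"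
    and nk: "\<And>v. v \<in> carrier_vec k \<Longrightarrow> transpose_mat F *\<^sub>v v = 0\<^sub>v d \<Longrightarrow> v = 0\<^sub>v k"
  shows "pinv F \<in> carrier_mat d k \<and> F * pinv F = 1\<^sub>m k"
proof -
  have Ft: "transpose_mat F \<in> carrier_mat d k" using F by simp
  define B where "B = F * transpose_mat F"
  have B: "B \<in> carrier_mat k k" using F by (simp add: B_def)
  have dB: "det B \<noteq> 0"
  proof
    assume "det B = 0"
    then obtain v where v: "v \<in> carrier_vec k" "v \<noteq> 0\<^sub>v k" "B *\<^sub>v v = 0\<^sub>v k"
      using det_0_iff_vec_prod_zero_field[OF B] by auto
    have Fv: "transpose_mat F *\<^sub>v v \<in> carrier_vec d" using Ft v by simp
    have "(transpose_mat F *\<^sub>v v) \<bullet> (transpose_mat F *\<^sub>v v) = (F *\<^sub>v (transpose_mat F *\<^sub>v v)) \<bullet> v"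
      using transpose_vec_mult_scalar[OF Ft v(1) Fv] by simp
    also have "F *\<^sub>v (transpose_mat F *\<^sub>v v) = B *\<^sub>v v" using F Ft v by (simp add: B_def)
    also have "(B *\<^sub>v v) \<bullet> v = 0" using v by simp
    finally have "transpose_mat F *\<^sub>v v = 0\<^sub>v d" using sp_zero Fv by blast
    then show False using nk v by blast
  qed
  define Bi where "Bi = (1 / det B) \<cdot>\<^sub>m adj_mat B"
  have Bi: "Bi \<in> carrier_mat k k" using adj_mat(1)[OF B] by (simp add: Bi_def)
  have BBi: "B * Bi = 1\<^sub>m k"
  proof -
    have "B * Bi = (1 / det B) \<cdot>\<^sub>m (B * adj_mat B)"
      unfolding Bi_def by (rule mult_smult_distrib[OF B adj_mat(1)[OF B]])
    also have "\<dots> = 1\<^sub>m k" using adj_mat(2)[OF B] dB by (intro eq_matI) auto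
    finally show ?thesis .
  qed
  have BiB: "Bi * B = 1\<^sub>m k" using mat_mult_left_right_inverse[OF B Bi BBi] .
  have Bsym: "transpose_mat B = B" using transpose_mult[OF F Ft] by (simp add: B_def)
  have Bit: "transpose_mat Bi \<in> carrier_mat k k" using Bi by simp
  have "transpose_mat Bi * B = 1\<^sub>m k"
    using transpose_mult[OF B Bi] BBi Bsym by simp
  then have Bisym: "transpose_mat Bi = Bi"
    using assoc_mult_mat[OF Bit B Bi] BBi Bit Bi by simp
  define G where "G = transpose_mat F * Bi"
  have G: "G \<in> carrier_mat d k" using Ft Bi by (simp add: G_def)
  have FG: "F * G = 1\<^sub>m k"
    using assoc_mult_mat[OF F Ft Bi] BBi by (simp add: G_def B_def)
  have p1: "F * G * F = F" using FG F by simp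
  have p2: "G * F * G = G" using assoc_mult_mat[OF G F G] FG G by simp
  have p3: "transpose_mat (F * G) = F * G" using FG by simp
  have p4: "transpose_mat (G * F) = G * F"
  proof -
    have "transpose_mat (G * F) = transpose_mat F * transpose_mat G" using transpose_mult[OF G F] .
    also have "transpose_mat G = transpose_mat Bi * F" using transpose_mult[OF Ft Bi] by (simp add: G_def)
    also have "transpose_mat F * (transpose_mat Bi * F) = G * F"
      using Bisym assoc_mult_mat[OF Ft Bi F] by (simp add: G_def)
    finally show ?thesis .
  qed
  have "pinv F = G"
    unfolding pinv_def
  proof (rule the_equality)
    show "G \<in> carrier_mat (dim_col F) (dim_row F) \<and> F * G * F = F \<and> G * F * G = G \<and>
      transpose_mat (F * G) = F * G \<and> transpose_mat (G * F) = G * F"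
      using G F p1 p2 p3 p4 by simp
  next
    fix X assume "X \<in> carrier_mat (dim_col F) (dim_row F) \<and> F * X * F = F \<and> X * F * X = X \<and>
      transpose_mat (F * X) = F * X \<and> transpose_mat (X * F) = X * F"
    then show "X = G" using mp_unique[OF F _ G _ _ _ _ p1 p2 p3 p4] F by auto
  qed
  then show ?thesis using G FG by simp
qed

lemma orth_cancel:
  assumes Om: "Om \<in> carrier_mat N N" and OO: "transpose_mat Om * Om = 1\<^sub>m N" and z: "z \<in> carrier_vec N"
  shows "transpose_mat Om *\<^sub>v (Om *\<^sub>v z) = (z :: real vec)"
proof -
  have "transpose_mat Om *\<^sub>v (Om *\<^sub>v z) = (transpose_mat Om * Om) *\<^sub>v z"
    using Om z by (metis assoc_mult_mat_vec transpose_carrier_mat)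
  then show ?thesis using OO z by simp
qed

lemma sig_t_vec:
  assumes Sig: "\<Sigma> \<in> carrier_mat m n" "\<forall>i<m. \<forall>j<n. \<Sigma> $$ (i,j) = (if i = j then \<sigma> i else 0)"
    and nm: "n \<le> m" and u: "u \<in> carrier_vec m"
  shows "transpose_mat \<Sigma> *\<^sub>v u = vec n (\<lambda>j. \<sigma> j * u $ j :: real)"
proof (rule eq_vecI)
  fix j assume "j < dim_vec (vec n (\<lambda>j. \<sigma> j * u $ j))"
  then have j: "j < n" by simp
  have "(transpose_mat \<Sigma> *\<^sub>v u) $ j = (\<Sum>l=0..<m. \<Sigma> $$ (l, j) * u $ l)"
    using Sig(1) u j by (simp add: scalar_prod_def)
  also have "\<dots> = (\<Sum>l=0..<m. if l = j then \<sigma> j * u $ j else 0)"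
    by (rule sum.cong) (use Sig(2) j in auto)
  also have "\<dots> = \<sigma> j * u $ j" using j nm by simp
  finally show "(transpose_mat \<Sigma> *\<^sub>v u) $ j = vec n (\<lambda>j. \<sigma> j * u $ j) $ j" using j by simp
qed (use Sig in simp)

lemma sig_vec:
  assumes Sig: "\<Sigma> \<in> carrier_mat m n" "\<forall>i<m. \<forall>j<n. \<Sigma> $$ (i,j) = (if i = j then \<sigma> i else 0)"
    and v: "v \<in> carrier_vec n"
  shows "\<Sigma> *\<^sub>v v = vec m (\<lambda>j. if j < n then \<sigma> j * v $ j else 0 :: real)"
proof (rule eq_vecI)
  fix j assume "j < dim_vec (vec m (\<lambda>j. if j < n then \<sigma> j * v $ j else 0 :: real))"
  then have j: "j < m" by simp
  have "(\<Sigma> *\<^sub>v v) $ j = (\<Sum>l=0..<n. \<Sigma> $$ (j, l) * v $ l)"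
    using Sig(1) v j by (simp add: scalar_prod_def)
  also have "\<dots> = (\<Sum>l=0..<n. if l = j then \<sigma> j * v $ j else 0)"
    by (rule sum.cong) (use Sig(2) j in auto)
  also have "\<dots> = (if j < n then \<sigma> j * v $ j else 0)" by simp
  finally show "(\<Sigma> *\<^sub>v v) $ j = vec m (\<lambda>j. if j < n then \<sigma> j * v $ j else 0) $ j" using j by simp
qed (use Sig in simp)

locale svd_setting =
  fixes m n :: nat and A U \<Sigma> V :: "real mat" and \<sigma> :: "nat \<Rightarrow> real"
  assumes nm: "n \<le> m"
    and U: "U \<in> carrier_mat m m" "transpose_mat U * U = 1\<^sub>m m"
    and V: "V \<in> carrier_mat n n" "transpose_mat V * V = 1\<^sub>m n"
    and Sig: "\<Sigma> \<in> carrier_mat m n" "\<forall>i<m. \<forall>j<n. \<Sigma> $$ (i,j) = (if i = j then \<sigma> i else 0)"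
    and svd: "A = U * \<Sigma> * transpose_mat V"
begin

lemma A_carrier: "A \<in> carrier_mat m n" using U V Sig by (simp add: svd)

lemma At_vec:
  assumes y: "y \<in> carrier_vec m"
  shows "transpose_mat A *\<^sub>v y = V *\<^sub>v vec n (\<lambda>j. \<sigma> j * (transpose_mat U *\<^sub>v y) $ j)"
proof -
  have "transpose_mat A = V * transpose_mat \<Sigma> * transpose_mat U"
  proof -
    have "transpose_mat A = transpose_mat (transpose_mat V) * transpose_mat (U * \<Sigma>)"
      using transpose_mult[OF mult_carrier_mat[OF U(1) Sig(1)], of "transpose_mat V" n] V by (simp add: svd)
    also have "transpose_mat (U * \<Sigma>) = transpose_mat \<Sigma> * transpose_mat U"
      using transpose_mult[OF U(1) Sig(1)] .
    finally show ?thesis using V U Sig by simp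
  qed
  moreover have St: "transpose_mat \<Sigma> \<in> carrier_mat n m" using Sig by simp
  moreover have Ut: "transpose_mat U \<in> carrier_mat m m" using U by simp
  ultimately have "transpose_mat A *\<^sub>v y = V *\<^sub>v (transpose_mat \<Sigma> *\<^sub>v (transpose_mat U *\<^sub>v y))"
    using assoc_mult_mat_vec[OF mult_carrier_mat[OF V(1) St] Ut y] assoc_mult_mat_vec[OF V(1) St, of "transpose_mat U *\<^sub>v y"] Ut y
    by simp
  also have "transpose_mat \<Sigma> *\<^sub>v (transpose_mat U *\<^sub>v y) = vec n (\<lambda>j. \<sigma> j * (transpose_mat U *\<^sub>v y) $ j)"
    using sig_t_vec[OF Sig nm, of "transpose_mat U *\<^sub>v y"] U y by simp
  finally show ?thesis .
qed

lemma A_vec: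
  assumes v: "v \<in> carrier_vec n"
  shows "A *\<^sub>v v = U *\<^sub>v vec m (\<lambda>j. if j < n then \<sigma> j * (transpose_mat V *\<^sub>v v) $ j else 0)"
proof -
  have Vt: "transpose_mat V \<in> carrier_mat n n" using V by simp
  have "A *\<^sub>v v = U *\<^sub>v (\<Sigma> *\<^sub>v (transpose_mat V *\<^sub>v v))"
    unfolding svd using assoc_mult_mat_vec[OF mult_carrier_mat[OF U(1) Sig(1)] Vt v] assoc_mult_mat_vec[OF U(1) Sig(1), of "transpose_mat V *\<^sub>v v"] Vt v
    by simp
  also have "\<Sigma> *\<^sub>v (transpose_mat V *\<^sub>v v) = vec m (\<lambda>j. if j < n then \<sigma> j * (transpose_mat V *\<^sub>v v) $ j else 0)"
    using sig_vec[OF Sig, of "transpose_mat V *\<^sub>v v"] V v by simp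
  finally show ?thesis .
qed

lemma AtA_pow_vec:
  assumes v: "v \<in> carrier_vec n"
  shows "(transpose_mat A * A) ^\<^sub>m q *\<^sub>v v = V *\<^sub>v vec n (\<lambda>j. \<sigma> j ^ (2*q) * (transpose_mat V *\<^sub>v v) $ j)"
  using v
proof (induction q arbitrary: v)
  case 0
  have AtA: "transpose_mat A * A \<in> carrier_mat n n" using A_carrier by simp
  have "vec n (\<lambda>j. \<sigma> j ^ (2*0) * (transpose_mat V *\<^sub>v v) $ j) = transpose_mat V *\<^sub>v v"
    using V 0 by (intro eq_vecI) auto
  moreover have "V *\<^sub>v (transpose_mat V *\<^sub>v v) = v"
    using orth_cancel[of "transpose_mat V" n v] V orth_right[OF V] 0 by simp
  moreover have "dim_col A = n" using A_carrier by simp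
  ultimately show ?case using AtA 0 by simp
next
  case (Suc q)
  have AtA: "transpose_mat A * A \<in> carrier_mat n n" using A_carrier by simp
  define a where "a = vec n (\<lambda>j. \<sigma> j ^ 2 * (transpose_mat V *\<^sub>v v) $ j)"
  have a: "a \<in> carrier_vec n" by (simp add: a_def)
  have Av: "A *\<^sub>v v \<in> carrier_vec m" using A_carrier Suc.prems by simp
  have "(transpose_mat A * A) *\<^sub>v v = transpose_mat A *\<^sub>v (A *\<^sub>v v)"
    using A_carrier Suc.prems by (metis assoc_mult_mat_vec transpose_carrier_mat)
  also have "\<dots> = V *\<^sub>v vec n (\<lambda>j. \<sigma> j * (transpose_mat U *\<^sub>v (A *\<^sub>v v)) $ j)"
    by (rule At_vec[OF Av])
  also have "transpose_mat U *\<^sub>v (A *\<^sub>v v) = vec m (\<lambda>j. if j < n then \<sigma> j * (transpose_mat V *\<^sub>v v) $ j else 0)"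
    using A_vec[OF Suc.prems] orth_cancel[OF U] by simp
  also have "vec n (\<lambda>j. \<sigma> j * vec m (\<lambda>j. if j < n then \<sigma> j * (transpose_mat V *\<^sub>v v) $ j else 0) $ j) = a"
    unfolding a_def using nm by (intro eq_vecI) (auto simp: power2_eq_square)
  finally have e1: "(transpose_mat A * A) *\<^sub>v v = V *\<^sub>v a" .
  have "(transpose_mat A * A) ^\<^sub>m Suc q *\<^sub>v v = (transpose_mat A * A) ^\<^sub>m q *\<^sub>v ((transpose_mat A * A) *\<^sub>v v)"
    using assoc_mult_mat_vec[OF pow_carrier_mat[OF AtA] AtA Suc.prems] by simp
  also have "\<dots> = V *\<^sub>v vec n (\<lambda>j. \<sigma> j ^ (2*q) * (transpose_mat V *\<^sub>v (V *\<^sub>v a)) $ j)"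
    using Suc.IH[of "V *\<^sub>v a"] V a e1 by simp
  also have "transpose_mat V *\<^sub>v (V *\<^sub>v a) = a" using orth_cancel[OF V a] .
  also have "vec n (\<lambda>j. \<sigma> j ^ (2*q) * a $ j) = vec n (\<lambda>j. \<sigma> j ^ (2 * Suc q) * (transpose_mat V *\<^sub>v v) $ j)"
    unfolding a_def by (intro eq_vecI) (auto simp: power_add power2_eq_square)
  finally show ?case .
qed


lemma B_vec:
  assumes Phi: "\<Phi> \<in> carrier_mat m d" and g: "g \<in> carrier_vec d"
  shows "((transpose_mat A * A) ^\<^sub>m q * transpose_mat A * \<Phi>) *\<^sub>v g
     = V *\<^sub>v vec n (\<lambda>j. \<sigma> j ^ (2*q+1) * (transpose_mat U *\<^sub>v (\<Phi> *\<^sub>v g)) $ j)"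
proof -
  have AtA: "transpose_mat A * A \<in> carrier_mat n n" using A_carrier by simp
  have At: "transpose_mat A \<in> carrier_mat n m" using A_carrier by simp
  have y: "\<Phi> *\<^sub>v g \<in> carrier_vec m" using Phi g by simp
  define u where "u = transpose_mat U *\<^sub>v (\<Phi> *\<^sub>v g)"
  define a where "a = vec n (\<lambda>j. \<sigma> j * u $ j)"
  have a: "a \<in> carrier_vec n" by (simp add: a_def)
  have "((transpose_mat A * A) ^\<^sub>m q * transpose_mat A * \<Phi>) *\<^sub>v g
      = (transpose_mat A * A) ^\<^sub>m q *\<^sub>v (transpose_mat A *\<^sub>v (\<Phi> *\<^sub>v g))"
    using assoc_mult_mat_vec[OF mult_carrier_mat[OF pow_carrier_mat[OF AtA] At] Phi g]
      assoc_mult_mat_vec[OF pow_carrier_mat[OF AtA] At y] by simp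
  also have "transpose_mat A *\<^sub>v (\<Phi> *\<^sub>v g) = V *\<^sub>v a" using At_vec[OF y] by (simp add: a_def u_def)
  also have "(transpose_mat A * A) ^\<^sub>m q *\<^sub>v (V *\<^sub>v a) = V *\<^sub>v vec n (\<lambda>j. \<sigma> j ^ (2*q) * (transpose_mat V *\<^sub>v (V *\<^sub>v a)) $ j)"
    using AtA_pow_vec[of "V *\<^sub>v a"] V a by simp
  also have "transpose_mat V *\<^sub>v (V *\<^sub>v a) = a" using orth_cancel[OF V a] .
  also have "vec n (\<lambda>j. \<sigma> j ^ (2*q) * a $ j) = vec n (\<lambda>j. \<sigma> j ^ (2*q+1) * u $ j)"
    unfolding a_def by (intro eq_vecI) auto
  finally show ?thesis by (simp add: u_def)
qed

lemma AB_vec: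
  assumes Phi: "\<Phi> \<in> carrier_mat m d" and g: "g \<in> carrier_vec d"
  shows "A *\<^sub>v (((transpose_mat A * A) ^\<^sub>m q * transpose_mat A * \<Phi>) *\<^sub>v g)
     = U *\<^sub>v vec m (\<lambda>j. if j < n then \<sigma> j ^ (2*q+2) * (transpose_mat U *\<^sub>v (\<Phi> *\<^sub>v g)) $ j else 0)"
proof -
  define b where "b = vec n (\<lambda>j. \<sigma> j ^ (2*q+1) * (transpose_mat U *\<^sub>v (\<Phi> *\<^sub>v g)) $ j)"
  have b: "b \<in> carrier_vec n" by (simp add: b_def)
  have "A *\<^sub>v (((transpose_mat A * A) ^\<^sub>m q * transpose_mat A * \<Phi>) *\<^sub>v g) = A *\<^sub>v (V *\<^sub>v b)"
    using B_vec[OF Phi g] by (simp add: b_def)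
  also have "\<dots> = U *\<^sub>v vec m (\<lambda>j. if j < n then \<sigma> j * (transpose_mat V *\<^sub>v (V *\<^sub>v b)) $ j else 0)"
    using A_vec[of "V *\<^sub>v b"] V b by simp
  also have "transpose_mat V *\<^sub>v (V *\<^sub>v b) = b" using orth_cancel[OF V b] .
  also have "vec m (\<lambda>j. if j < n then \<sigma> j * b $ j else 0)
     = vec m (\<lambda>j. if j < n then \<sigma> j ^ (2*q+2) * (transpose_mat U *\<^sub>v (\<Phi> *\<^sub>v g)) $ j else 0)"
    unfolding b_def by (intro eq_vecI) auto
  finally show ?thesis .
qed

end

lemma first_cols_carrier: "U \<in> carrier_mat m m' \<Longrightarrow> first_cols U k \<in> carrier_mat m k"
  by (simp add: first_cols_def)

lemma last_cols_carrier: "U \<in> carrier_mat m m' \<Longrightarrow> last_cols U k \<in> carrier_mat m (m' - k)"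
  by (simp add: last_cols_def)

lemma col_first_cols: "U \<in> carrier_mat m m' \<Longrightarrow> j < k \<Longrightarrow> k \<le> m' \<Longrightarrow> col (first_cols U k) j = col U j"
  by (intro eq_vecI) (auto simp: first_cols_def)

lemma col_last_cols: "U \<in> carrier_mat m m' \<Longrightarrow> j < m' - k \<Longrightarrow> col (last_cols U k) j = col U (j + k)"
  by (intro eq_vecI) (auto simp: last_cols_def)

lemma first_cols_vec:
  assumes Om: "Om \<in> carrier_mat N N" and kN: "k \<le> N" and x: "x \<in> carrier_vec k"
  shows "first_cols Om k *\<^sub>v x = Om *\<^sub>v vec N (\<lambda>j. if j < k then x $ j else 0)"
proof (rule eq_vecI)
  fix r assume "r < dim_vec (Om *\<^sub>v vec N (\<lambda>j. if j < k then x $ j else 0))"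
  then have r: "r < N" using Om by simp
  have "(Om *\<^sub>v vec N (\<lambda>j. if j < k then x $ j else 0)) $ r = (\<Sum>l=0..<N. Om $$ (r,l) * (if l < k then x $ l else 0))"
    using Om r by (simp add: scalar_prod_def)
  also have "\<dots> = (\<Sum>l=0..<N. if l < k then Om $$ (r,l) * x $ l else 0)" by (rule sum.cong) auto
  also have "\<dots> = (\<Sum>l=0..<k. Om $$ (r,l) * x $ l)" using kN by (rule sum_if_less)
  also have "\<dots> = (first_cols Om k *\<^sub>v x) $ r"
    using Om r x by (simp add: first_cols_def scalar_prod_def)
  finally show "(first_cols Om k *\<^sub>v x) $ r = (Om *\<^sub>v vec N (\<lambda>j. if j < k then x $ j else 0)) $ r" by simp
qed (use Om in \<open>simp add: first_cols_def\<close>)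

lemma construct:
  fixes Om U \<Phi> G :: "real mat" and e \<sigma> :: "nat \<Rightarrow> real" and x :: "real vec"
  assumes Om: "Om \<in> carrier_mat N N" "transpose_mat Om * Om = 1\<^sub>m N"
    and U: "U \<in> carrier_mat m m"
    and Phi: "\<Phi> \<in> carrier_mat m d"
    and kN: "k \<le> N" and Nm: "N \<le> m"
    and G: "G \<in> carrier_mat d k"
    and FG: "transpose_mat (first_cols U k) * \<Phi> * G = 1\<^sub>m k"
    and ik: "i < k"
    and e1: "\<forall>j<k. e j = \<sigma> j ^ p"
    and e2: "\<forall>j. k \<le> j \<longrightarrow> j < N \<longrightarrow> \<bar>e j\<bar> \<le> \<sigma> k ^ p"
    and sig_i: "\<sigma> i > 0" and sig_mono: "\<forall>j\<le>i. \<sigma> i \<le> \<sigma> j" and sk: "\<sigma> k \<ge> 0"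
    and x: "x \<in> carrier_vec k" and xz: "\<forall>j. i < j \<longrightarrow> j < k \<longrightarrow> x $ j = 0"
  shows "\<exists>w. w \<in> carrier_vec N \<and>
     Om *\<^sub>v vec N (\<lambda>j. e j * (transpose_mat U *\<^sub>v (\<Phi> *\<^sub>v (G *\<^sub>v vec k (\<lambda>j. x $ j / \<sigma> j ^ p)))) $ j)
       = first_cols Om k *\<^sub>v x + w \<and>
     (first_cols Om k *\<^sub>v x) \<bullet> w = 0 \<and>
     w \<bullet> w \<le> ((\<sigma> k / \<sigma> i)^p * spec_norm (transpose_mat (last_cols U k) * \<Phi> * G))^2 * (x \<bullet> x)"
proof -
  define s where "s = vec k (\<lambda>j. x $ j / \<sigma> j ^ p)"
  have s: "s \<in> carrier_vec k" by (simp add: s_def)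
  define g where "g = G *\<^sub>v s"
  have g: "g \<in> carrier_vec d" using G s by (simp add: g_def)
  define y where "y = \<Phi> *\<^sub>v g"
  have y: "y \<in> carrier_vec m" using Phi g by (simp add: y_def)
  define u where "u = transpose_mat U *\<^sub>v y"
  have km: "k \<le> m" using kN Nm by simp
  have FU: "first_cols U k \<in> carrier_mat m k" using first_cols_carrier[OF U] .
  have LU: "last_cols U k \<in> carrier_mat m (m - k)" using last_cols_carrier[OF U] .
  have F1: "transpose_mat (first_cols U k) * \<Phi> \<in> carrier_mat k d" using FU Phi by simp
  define F2 where "F2 = transpose_mat (last_cols U k) * \<Phi>"
  have F2: "F2 \<in> carrier_mat (m - k) d" using LU Phi by (simp add: F2_def)
  have u1: "u $ j = s $ j" if j: "j < k" for j
  proof -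
    have "(transpose_mat (first_cols U k) * \<Phi>) *\<^sub>v g = s"
      using assoc_mult_mat_vec[OF F1 G s] FG s by (simp add: g_def)
    then have "s $ j = ((transpose_mat (first_cols U k) * \<Phi>) *\<^sub>v g) $ j" by simp
    also have "\<dots> = (transpose_mat (first_cols U k) *\<^sub>v y) $ j"
      using assoc_mult_mat_vec[of "transpose_mat (first_cols U k)" k m \<Phi> d g] FU Phi g by (simp add: y_def)
    also have "\<dots> = col (first_cols U k) j \<bullet> y" using FU j by simp
    also have "\<dots> = col U j \<bullet> y" using col_first_cols[OF U j km] by simp
    also have "\<dots> = u $ j" using U j km by (simp add: u_def)
    finally show ?thesis by simp
  qed
  have u2: "u $ (j + k) = (F2 *\<^sub>v g) $ j" if j: "j < m - k" for j
  proof -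
    have "(F2 *\<^sub>v g) $ j = (transpose_mat (last_cols U k) *\<^sub>v y) $ j"
      using assoc_mult_mat_vec[of "transpose_mat (last_cols U k)" "m-k" m \<Phi> d g] LU Phi g by (simp add: y_def F2_def)
    also have "\<dots> = col (last_cols U k) j \<bullet> y" using LU j by simp
    also have "\<dots> = col U (j + k) \<bullet> y" using col_last_cols[OF U j] by simp
    also have "\<dots> = u $ (j + k)" using U j by (simp add: u_def)
    finally show ?thesis by simp
  qed
  define xh where "xh = vec N (\<lambda>j. if j < k then x $ j else 0)"
  define wh where "wh = vec N (\<lambda>j. if j < k then 0 else e j * u $ j)"
  have xh: "xh \<in> carrier_vec N" and wh: "wh \<in> carrier_vec N" by (simp_all add: xh_def wh_def)
  have split: "vec N (\<lambda>j. e j * u $ j) = xh + wh"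
  proof (rule eq_vecI)
    fix j assume "j < dim_vec (xh + wh)"
    then have j: "j < N" by (simp add: xh_def wh_def)
    show "vec N (\<lambda>j. e j * u $ j) $ j = (xh + wh) $ j"
    proof (cases "j < k")
      case True
      have "e j * u $ j = x $ j"
      proof (cases "j \<le> i")
        case True2: True
        have "\<sigma> j > 0" using sig_mono sig_i True2 by force
        then show ?thesis using e1 u1 True by (simp add: s_def)
      next
        case False
        then show ?thesis using e1 u1 True xz by (simp add: s_def)
      qed
      then show ?thesis using j True by (simp add: xh_def wh_def)
    next
      case False
      then show ?thesis using j by (simp add: xh_def wh_def)
    qed
  qed (simp add: xh_def wh_def)
  define w where "w = Om *\<^sub>v wh"
  have w: "w \<in> carrier_vec N" using Om wh by (simp add: w_def)
  have eqz: "Om *\<^sub>v vec N (\<lambda>j. e j * u $ j) = first_cols Om k *\<^sub>v x + w"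
    using split first_cols_vec[OF Om(1) kN x] mult_add_distrib_mat_vec[OF Om(1) xh wh]
    by (simp add: xh_def w_def)
  have orth: "(first_cols Om k *\<^sub>v x) \<bullet> w = 0"
  proof -
    have "(first_cols Om k *\<^sub>v x) \<bullet> w = xh \<bullet> wh"
      using first_cols_vec[OF Om(1) kN x] orth_dot[OF Om xh wh] by (simp add: xh_def w_def)
    also have "\<dots> = 0" by (simp add: xh_def wh_def scalar_prod_def)
    finally show ?thesis .
  qed
  define c where "c = spec_norm (F2 * G)"
  have ww: "w \<bullet> w = wh \<bullet> wh" using orth_dot[OF Om wh wh] by (simp add: w_def)
  have b1: "wh \<bullet> wh \<le> (\<sigma> k ^ p)^2 * (\<Sum>j=0..<N. if j < k then 0 else (u $ j)^2)"
  proof -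
    have "wh \<bullet> wh = (\<Sum>j=0..<N. (if j < k then 0 else e j * u $ j)^2)"
      by (simp add: wh_def scalar_prod_def power2_eq_square)
    also have "\<dots> \<le> (\<Sum>j=0..<N. (\<sigma> k ^ p)^2 * (if j < k then 0 else (u $ j)^2))"
    proof (rule sum_mono)
      fix j assume j: "j \<in> {0..<N}"
      show "(if j < k then 0 else e j * u $ j)^2 \<le> (\<sigma> k ^ p)^2 * (if j < k then 0 else (u $ j)^2)"
      proof (cases "j < k")
        case False
        have "\<bar>e j\<bar> \<le> \<sigma> k ^ p" using e2 False j by auto
        then have "(e j)^2 \<le> (\<sigma> k ^ p)^2" by (metis abs_ge_zero order_trans power2_abs power_mono)
        then have "(e j)^2 * (u $ j)^2 \<le> (\<sigma> k ^ p)^2 * (u $ j)^2" by (intro mult_right_mono) auto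
        then show ?thesis using False by (simp add: power_mult_distrib)
      qed simp
    qed
    finally show ?thesis by (simp add: sum_distrib_left)
  qed
  have b2: "(\<Sum>j=0..<N. if j < k then 0 else (u $ j)^2) \<le> (F2 *\<^sub>v g) \<bullet> (F2 *\<^sub>v g)"
  proof -
    have "(\<Sum>j=0..<N. if j < k then 0 else (u $ j)^2) \<le> (\<Sum>j=0..<m. if j < k then 0 else (u $ j)^2)"
      by (rule sum_mono2) (use Nm in auto)
    also have "\<dots> = (\<Sum>j=0..<k. if j < k then 0 else (u $ j)^2) + (\<Sum>j=k..<m. if j < k then 0 else (u $ j)^2)"
      using sum.atLeastLessThan_concat[of 0 k m "\<lambda>j. if j < k then 0 else (u $ j)^2"] km by simp
    also have "\<dots> = (\<Sum>j=k..<m. (u $ j)^2)"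
    proof -
      have "(\<Sum>j=0..<k. if j < k then 0 else (u $ j)^2) = 0" by (rule sum.neutral) auto
      moreover have "(\<Sum>j=k..<m. if j < k then 0 else (u $ j)^2) = (\<Sum>j=k..<m. (u $ j)^2)"
        by (rule sum.cong) auto
      ultimately show ?thesis by simp
    qed
    also have "\<dots> = (\<Sum>j=0..<m-k. (u $ (j + k))^2)"
      using sum.shift_bounds_nat_ivl[of "\<lambda>j. (u $ j)^2" 0 k "m-k"] km by simp
    also have "\<dots> = (\<Sum>j=0..<m-k. ((F2 *\<^sub>v g) $ j)^2)" using u2 by simp
    also have "\<dots> = (F2 *\<^sub>v g) \<bullet> (F2 *\<^sub>v g)" using F2 by (simp add: scalar_prod_def power2_eq_square)
    finally show ?thesis .
  qed
  have b3: "(F2 *\<^sub>v g) \<bullet> (F2 *\<^sub>v g) \<le> c^2 * (s \<bullet> s)"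
  proof -
    have "F2 *\<^sub>v g = (F2 * G) *\<^sub>v s" using assoc_mult_mat_vec[OF F2 G s] by (simp add: g_def)
    then show ?thesis using spec_norm_sq[OF mult_carrier_mat[OF F2 G] s] by (simp add: c_def)
  qed
  have b4: "s \<bullet> s \<le> (x \<bullet> x) / (\<sigma> i ^ p)^2"
  proof -
    have sp: "\<sigma> i ^ p > 0" using sig_i by simp
    have "s \<bullet> s = (\<Sum>j=0..<k. (x $ j / \<sigma> j ^ p)^2)" by (simp add: s_def scalar_prod_def power2_eq_square)
    also have "\<dots> \<le> (\<Sum>j=0..<k. (x $ j)^2 / (\<sigma> i ^ p)^2)"
    proof (rule sum_mono)
      fix j assume j: "j \<in> {0..<k}"
      show "(x $ j / \<sigma> j ^ p)^2 \<le> (x $ j)^2 / (\<sigma> i ^ p)^2"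
      proof (cases "j \<le> i")
        case True
        have "\<sigma> i ^ p \<le> \<sigma> j ^ p" using sig_mono True sig_i by (intro power_mono) auto
        then have "(\<sigma> i ^ p)^2 \<le> (\<sigma> j ^ p)^2" using sp by (simp add: power_mono)
        moreover have "(\<sigma> i ^ p)^2 > 0" using sp by (simp only: zero_less_power)
        moreover have "\<sigma> j > 0" using sig_mono True sig_i by force
        then have "(\<sigma> j ^ p)^2 > 0" by simp
        ultimately have "(x $ j)^2 / (\<sigma> j ^ p)^2 \<le> (x $ j)^2 / (\<sigma> i ^ p)^2"
          by (intro divide_left_mono) (auto intro!: mult_pos_pos simp del: zero_less_power)
        then show ?thesis by (simp add: power_divide)
      next
        case False
        then show ?thesis using xz j by simp
      qed
    qed
    also have "\<dots> = (x \<bullet> x) / (\<sigma> i ^ p)^2"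
      using x by (simp add: scalar_prod_def power2_eq_square sum_divide_distrib)
    finally show ?thesis .
  qed
  have "w \<bullet> w \<le> (\<sigma> k ^ p)^2 * (c^2 * ((x \<bullet> x) / (\<sigma> i ^ p)^2))"
  proof -
    have nn: "(\<sigma> k ^ p)^2 \<ge> 0" by simp
    have "w \<bullet> w \<le> (\<sigma> k ^ p)^2 * ((F2 *\<^sub>v g) \<bullet> (F2 *\<^sub>v g))"
      using ww b1 b2 mult_left_mono[OF b2 nn] by linarith
    also have "\<dots> \<le> (\<sigma> k ^ p)^2 * (c^2 * (s \<bullet> s))" using b3 nn by (intro mult_left_mono) auto
    also have "\<dots> \<le> (\<sigma> k ^ p)^2 * (c^2 * ((x \<bullet> x) / (\<sigma> i ^ p)^2))"
      using b4 nn by (intro mult_left_mono) auto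
    finally show ?thesis .
  qed
  also have "\<dots> = ((\<sigma> k / \<sigma> i)^p * c)^2 * (x \<bullet> x)"
    by (simp add: power_divide power_mult_distrib)
  finally have wb: "w \<bullet> w \<le> ((\<sigma> k / \<sigma> i)^p * c)^2 * (x \<bullet> x)" .
  show ?thesis using w eqz orth wb
    by (auto simp: c_def F2_def u_def y_def g_def s_def)
qed

lemma first_cols_orth:
  assumes U: "U \<in> carrier_mat m m" and UU: "transpose_mat U * U = 1\<^sub>m m" and km: "k \<le> m"
  shows "transpose_mat (first_cols U k) * first_cols U k = (1\<^sub>m k :: real mat)"
proof (rule eq_matI)
  fix a b assume "a < dim_row (1\<^sub>m k :: real mat)" "b < dim_col (1\<^sub>m k :: real mat)"
  then have a: "a < k" and b: "b < k" by auto
  have "(transpose_mat (first_cols U k) * first_cols U k) $$ (a, b) = col (first_cols U k) a \<bullet> col (first_cols U k) b"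
    using a b by (simp add: first_cols_def)
  also have "\<dots> = col U a \<bullet> col U b" using col_first_cols[OF U a km] col_first_cols[OF U b km] by simp
  also have "\<dots> = (transpose_mat U * U) $$ (a, b)" using U a b km by simp
  also have "\<dots> = (1\<^sub>m k :: real mat) $$ (a, b)" using UU a b km by simp
  finally show "(transpose_mat (first_cols U k) * first_cols U k) $$ (a, b) = (1\<^sub>m k :: real mat) $$ (a, b)" .
qed (auto simp: first_cols_def)

theorem corollary2:
  fixes m n k p d q :: nat
    and A U \<Sigma> V \<Phi> Pbar Q R Ptil Rtil P L :: "real mat"
    and \<sigma> \<theta> \<phi> :: "nat \<Rightarrow> real"
  assumes "m \<ge> n" and "k \<ge> 1" and "p \<ge> 1" and "d = k + p" and "d < n"
    and A: "A \<in> carrier_mat m n"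
    and U: "U \<in> carrier_mat m m" "transpose_mat U * U = 1\<^sub>m m"
    and V: "V \<in> carrier_mat n n" "transpose_mat V * V = 1\<^sub>m n"
    and Sig: "\<Sigma> \<in> carrier_mat m n"
      "\<forall>i<m. \<forall>j<n. \<Sigma> $$ (i,j) = (if i = j then \<sigma> i else 0)"
    and sig_ord: "\<forall>i j. i \<le> j \<and> j < n \<longrightarrow> \<sigma> j \<le> \<sigma> i"
    and sig_nn: "\<forall>i<n. \<sigma> i \<ge> 0"
    and svd: "A = U * \<Sigma> * transpose_mat V"
    and sig_k: "\<sigma> (k - 1) > 0"
    and Phi: "\<Phi> \<in> carrier_mat m d"
    and Pbar: "Pbar \<in> carrier_mat n d" "orthonormal_cols Pbar"
      "col_range Pbar = col_range ((transpose_mat A * A) ^\<^sub>m q * transpose_mat A * \<Phi>)"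
    and QR: "Q \<in> carrier_mat m d" "orthonormal_cols Q" "R \<in> carrier_mat d d"
      "upper_triangular R" "A * Pbar = Q * R"
    and QR2: "Ptil \<in> carrier_mat d d" "orthonormal_cols Ptil" "Rtil \<in> carrier_mat d d"
      "upper_triangular Rtil" "transpose_mat R = Ptil * Rtil"
    and PL: "P = Pbar * Ptil" "L = transpose_mat Rtil"
    and rank: "vec_space.rank k (transpose_mat (first_cols U k) * \<Phi>) = k"
    and th: "principal_angles Q (first_cols U k) \<theta>"
    and ph: "principal_angles P (first_cols V k) \<phi>"
  shows "\<forall>i<k.
     (let \<delta> = \<sigma> k / \<sigma> i;
          c = spec_norm (transpose_mat (last_cols U k) * \<Phi> *
                          pinv (transpose_mat (first_cols U k) * \<Phi>))
      in cos (\<theta> i) \<ge> 1 / sqrt (1 + \<delta> ^ (4*q+4) * c\<^sup>2) \<and>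
         tan (\<theta> i) \<le> \<delta> ^ (2*q+2) * c \<and>
         cos (\<phi> i) \<ge> 1 / sqrt (1 + \<delta> ^ (4*q+2) * c\<^sup>2) \<and>
         tan (\<phi> i) \<le> \<delta> ^ (2*q+1) * c)"
proof (intro allI impI)
  fix i assume ik: "i < k"
  have kd: "k < d" using assms(3,4) by simp
  have kn: "k < n" using kd assms(5) by simp
  have nm: "n \<le> m" using assms(1) .
  have km: "k \<le> m" using kn nm by simp
  interpret S: svd_setting m n A U \<Sigma> V \<sigma>
    using nm U V Sig svd by unfold_locales auto
  have sig_pos: "\<forall>j<k. \<sigma> j > 0"
  proof (intro allI impI)
    fix j assume "j < k"
    then have "j \<le> k - 1 \<and> k - 1 < n" using kn by auto
    then have "\<sigma> (k - 1) \<le> \<sigma> j" using sig_ord by blast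
    then show "\<sigma> j > 0" using sig_k by simp
  qed
  have sig_i: "\<sigma> i > 0" using sig_pos ik by simp
  have sig_mono: "\<forall>j\<le>i. \<sigma> i \<le> \<sigma> j" using sig_ord ik kn by auto
  have sk: "\<sigma> k \<ge> 0" using sig_nn kn by simp
  define F1 where "F1 = transpose_mat (first_cols U k) * \<Phi>"
  have FU: "first_cols U k \<in> carrier_mat m k" using first_cols_carrier[OF U(1)] .
  have F1: "F1 \<in> carrier_mat k d" using FU Phi by (simp add: F1_def)
  have nk: "\<And>v. v \<in> carrier_vec k \<Longrightarrow> transpose_mat F1 *\<^sub>v v = 0\<^sub>v d \<Longrightarrow> v = 0\<^sub>v k"
    using vec_space.full_rank_no_left_kernel[OF F1] rank by (simp add: F1_def)
  obtain G where G: "G \<in> carrier_mat d k" and FG: "F1 * G = 1\<^sub>m k" and pG: "pinv F1 = G"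
    using pinv_right_inverse[OF F1 nk] by blast
  define c where "c = spec_norm (transpose_mat (last_cols U k) * \<Phi> * G)"
  have c0: "c \<ge> 0"
  proof -
    have "transpose_mat (last_cols U k) * \<Phi> * G \<in> carrier_mat (m - k) k"
    proof -
      have L: "transpose_mat (last_cols U k) \<in> carrier_mat (m-k) m"
        using last_cols_carrier[OF U(1), of k] by simp
      show ?thesis using mult_carrier_mat[OF mult_carrier_mat[OF L Phi] G] .
    qed
    then show ?thesis unfolding c_def by (rule spec_norm_nonneg) (use ik in simp)
  qed
  define \<delta> where "\<delta> = \<sigma> k / \<sigma> i"
  have d0: "\<delta> \<ge> 0" using sk sig_i by (simp add: \<delta>_def)
  define B where "B = (transpose_mat A * A) ^\<^sub>m q * transpose_mat A * \<Phi>"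
  have dcB: "dim_col B = d" using Phi by (simp add: B_def)
  have Bg: "\<exists>h0. h0 \<in> carrier_vec d \<and> Pbar *\<^sub>v h0 = B *\<^sub>v g" if g: "g \<in> carrier_vec d" for g
  proof -
    have "B *\<^sub>v g \<in> col_range B" using g dcB unfolding col_range_def by blast
    then have "B *\<^sub>v g \<in> col_range Pbar" using Pbar(3) by (simp add: B_def)
    then show ?thesis using Pbar(1) unfolding col_range_def by auto
  qed
  have Qo: "transpose_mat Q * Q = 1\<^sub>m d" using QR(2) QR(1) by (simp add: orthonormal_cols_def)
  have Yo: "transpose_mat (first_cols U k) * first_cols U k = 1\<^sub>m k" using first_cols_orth[OF U km] .
  have th_ang: "0 \<le> \<theta> i \<and> \<theta> i \<le> pi/2" using th ik FU unfolding principal_angles_def by auto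
  have ph_ang: "0 \<le> \<phi> i \<and> \<phi> i \<le> pi/2"
    using ph ik first_cols_carrier[OF V(1), of k] unfolding principal_angles_def by auto
  define t1 where "t1 = \<delta> ^ (2*q+2) * c"
  have t1: "t1 \<ge> 0" using d0 c0 by (simp add: t1_def)
  have sin1: "(sin (\<theta> i))^2 \<le> t1^2 / (1 + t1^2)"
  proof (rule angle_bound[OF QR(1) Qo FU Yo th ik])
    fix x :: "real vec" assume x: "x \<in> carrier_vec k" and xz: "\<forall>j. i < j \<longrightarrow> j < k \<longrightarrow> x $ j = 0"
    define e where "e = (\<lambda>j. if j < n then \<sigma> j ^ (2*q+2) else 0)"
    have e1: "\<forall>j<k. e j = \<sigma> j ^ (2*q+2)" using kn by (simp add: e_def)
    have e2: "\<forall>j. k \<le> j \<longrightarrow> j < m \<longrightarrow> \<bar>e j\<bar> \<le> \<sigma> k ^ (2*q+2)"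
    proof (intro allI impI)
      fix j assume j: "k \<le> j" "j < m"
      show "\<bar>e j\<bar> \<le> \<sigma> k ^ (2*q+2)"
      proof (cases "j < n")
        case True
        then have s0: "0 \<le> \<sigma> j" and s1: "\<sigma> j \<le> \<sigma> k" using sig_nn sig_ord j by auto
        have pm: "\<sigma> j ^ (2*q+2) \<le> \<sigma> k ^ (2*q+2)" by (rule power_mono[OF s1 s0])
        have ee: "e j = \<sigma> j ^ (2*q+2)" using True by (simp add: e_def)
        have p0: "\<sigma> j ^ (2*q+2) \<ge> 0" using s0 by (rule zero_le_power)
        show ?thesis using pm by (simp only: ee abs_of_nonneg[OF p0])
      qed (use sk in \<open>simp add: e_def\<close>)
    qed
    define s where "s = vec k (\<lambda>j. x $ j / \<sigma> j ^ (2*q+2))"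
    have s: "s \<in> carrier_vec k" by (simp add: s_def)
    define g where "g = G *\<^sub>v s"
    have g: "g \<in> carrier_vec d" using G s by (simp add: g_def)
    obtain w where w: "w \<in> carrier_vec m"
      and wz: "U *\<^sub>v vec m (\<lambda>j. e j * (transpose_mat U *\<^sub>v (\<Phi> *\<^sub>v g)) $ j) = first_cols U k *\<^sub>v x + w"
      and wo: "(first_cols U k *\<^sub>v x) \<bullet> w = 0"
      and wb: "w \<bullet> w \<le> ((\<sigma> k / \<sigma> i)^(2*q+2) * c)^2 * (x \<bullet> x)"
      using construct[OF U U(1) Phi km order.refl G _ ik e1 e2 sig_i sig_mono sk x xz] FG
      unfolding F1_def c_def g_def s_def by blast
    obtain h0 where h0: "h0 \<in> carrier_vec d" "Pbar *\<^sub>v h0 = B *\<^sub>v g" using Bg[OF g] by blast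
    have "A *\<^sub>v (B *\<^sub>v g) = U *\<^sub>v vec m (\<lambda>j. e j * (transpose_mat U *\<^sub>v (\<Phi> *\<^sub>v g)) $ j)"
      unfolding B_def S.AB_vec[OF Phi g] e_def by (intro arg_cong[where f="\<lambda>v. U *\<^sub>v v"] eq_vecI) auto
    moreover have "A *\<^sub>v (B *\<^sub>v g) = Q *\<^sub>v (R *\<^sub>v h0)"
    proof -
      have "A *\<^sub>v (B *\<^sub>v g) = A *\<^sub>v (Pbar *\<^sub>v h0)" using h0 by simp
      also have "\<dots> = (A * Pbar) *\<^sub>v h0" using S.A_carrier Pbar(1) h0 by simp
      also have "\<dots> = (Q * R) *\<^sub>v h0" using QR(5) by simp
      also have "\<dots> = Q *\<^sub>v (R *\<^sub>v h0)" using QR(1,3) h0 by simp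
      finally show ?thesis .
    qed
    ultimately have "Q *\<^sub>v (R *\<^sub>v h0) = first_cols U k *\<^sub>v x + w" using wz by simp
    moreover have "R *\<^sub>v h0 \<in> carrier_vec d" using QR(3) h0 by simp
    moreover have "((\<sigma> k / \<sigma> i)^(2*q+2) * c)^2 = t1^2" by (simp add: t1_def \<delta>_def)
    ultimately show "\<exists>h w. h \<in> carrier_vec d \<and> w \<in> carrier_vec m \<and> Q *\<^sub>v h = first_cols U k *\<^sub>v x + w \<and>
                (first_cols U k *\<^sub>v x) \<bullet> w = 0 \<and> w \<bullet> w \<le> t1^2 * (x \<bullet> x)"
      using w wo wb by metis
  qed
  have T1: "cos (\<theta> i) \<ge> 1 / sqrt (1 + t1^2) \<and> tan (\<theta> i) \<le> t1"
    using trig_bound[OF _ _ t1 sin1] th_ang by auto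
  define t2 where "t2 = \<delta> ^ (2*q+1) * c"
  have t2: "t2 \<ge> 0" using d0 c0 by (simp add: t2_def)
  have Pt: "Ptil * transpose_mat Ptil = 1\<^sub>m d"
    using orth_right[OF QR2(1)] QR2(1,2) by (simp add: orthonormal_cols_def)
  have Po: "transpose_mat P * P = 1\<^sub>m d"
  proof -
    have Pb: "transpose_mat Pbar * Pbar = 1\<^sub>m d" using Pbar(1,2) by (simp add: orthonormal_cols_def)
    have Pti: "transpose_mat Ptil * Ptil = 1\<^sub>m d" using QR2(1,2) by (simp add: orthonormal_cols_def)
    have Ptt: "transpose_mat Ptil \<in> carrier_mat d d" using QR2(1) by simp
    have Pbt: "transpose_mat Pbar \<in> carrier_mat d n" using Pbar(1) by simp
    have "transpose_mat P * P = (transpose_mat Ptil * transpose_mat Pbar) * (Pbar * Ptil)"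
      using transpose_mult[OF Pbar(1) QR2(1)] by (simp add: PL(1))
    also have "\<dots> = transpose_mat Ptil * (transpose_mat Pbar * (Pbar * Ptil))"
      by (rule assoc_mult_mat[OF Ptt Pbt mult_carrier_mat[OF Pbar(1) QR2(1)]])
    also have "transpose_mat Pbar * (Pbar * Ptil) = (transpose_mat Pbar * Pbar) * Ptil"
      by (rule assoc_mult_mat[OF Pbt Pbar(1) QR2(1), symmetric])
    finally show ?thesis using Pb Pti QR2(1) by simp
  qed
  have P: "P \<in> carrier_mat n d" using Pbar(1) QR2(1) by (simp add: PL(1))
  have FV: "first_cols V k \<in> carrier_mat n k" using first_cols_carrier[OF V(1)] .
  have Vo: "transpose_mat (first_cols V k) * first_cols V k = 1\<^sub>m k" using first_cols_orth[OF V] kn by simp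
  have sin2: "(sin (\<phi> i))^2 \<le> t2^2 / (1 + t2^2)"
  proof (rule angle_bound[OF P Po FV Vo ph ik])
    fix x :: "real vec" assume x: "x \<in> carrier_vec k" and xz: "\<forall>j. i < j \<longrightarrow> j < k \<longrightarrow> x $ j = 0"
    define e where "e = (\<lambda>j. \<sigma> j ^ (2*q+1))"
    have e1: "\<forall>j<k. e j = \<sigma> j ^ (2*q+1)" by (simp add: e_def)
    have e2: "\<forall>j. k \<le> j \<longrightarrow> j < n \<longrightarrow> \<bar>e j\<bar> \<le> \<sigma> k ^ (2*q+1)"
    proof (intro allI impI)
      fix j assume j: "k \<le> j" "j < n"
      then have s0: "0 \<le> \<sigma> j" and s1: "\<sigma> j \<le> \<sigma> k" using sig_nn sig_ord j by auto
      have pm: "\<sigma> j ^ (2*q+1) \<le> \<sigma> k ^ (2*q+1)" by (rule power_mono[OF s1 s0])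
      have p0: "\<sigma> j ^ (2*q+1) \<ge> 0" using s0 by (rule zero_le_power)
      show "\<bar>e j\<bar> \<le> \<sigma> k ^ (2*q+1)" using pm by (simp only: e_def abs_of_nonneg[OF p0])
    qed
    define s where "s = vec k (\<lambda>j. x $ j / \<sigma> j ^ (2*q+1))"
    have s: "s \<in> carrier_vec k" by (simp add: s_def)
    define g where "g = G *\<^sub>v s"
    have g: "g \<in> carrier_vec d" using G s by (simp add: g_def)
    obtain w where w: "w \<in> carrier_vec n"
      and wz: "V *\<^sub>v vec n (\<lambda>j. e j * (transpose_mat U *\<^sub>v (\<Phi> *\<^sub>v g)) $ j) = first_cols V k *\<^sub>v x + w"
      and wo: "(first_cols V k *\<^sub>v x) \<bullet> w = 0"
      and wb: "w \<bullet> w \<le> ((\<sigma> k / \<sigma> i)^(2*q+1) * c)^2 * (x \<bullet> x)"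
      using construct[OF V U(1) Phi _ nm G _ ik e1 e2 sig_i sig_mono sk x xz] FG kn
      unfolding F1_def c_def g_def s_def by fastforce
    obtain h0 where h0: "h0 \<in> carrier_vec d" "Pbar *\<^sub>v h0 = B *\<^sub>v g" using Bg[OF g] by blast
    have "B *\<^sub>v g = V *\<^sub>v vec n (\<lambda>j. e j * (transpose_mat U *\<^sub>v (\<Phi> *\<^sub>v g)) $ j)"
      unfolding B_def S.B_vec[OF Phi g] e_def by simp
    moreover have "B *\<^sub>v g = P *\<^sub>v (transpose_mat Ptil *\<^sub>v h0)"
    proof -
      have "P *\<^sub>v (transpose_mat Ptil *\<^sub>v h0) = Pbar *\<^sub>v (Ptil *\<^sub>v (transpose_mat Ptil *\<^sub>v h0))"
        using Pbar(1) QR2(1) h0 by (simp add: PL(1))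
      also have "Ptil *\<^sub>v (transpose_mat Ptil *\<^sub>v h0) = h0"
        using Pt QR2(1) h0 by (metis assoc_mult_mat_vec one_mult_mat_vec transpose_carrier_mat)
      finally show ?thesis using h0 by simp
    qed
    ultimately have "P *\<^sub>v (transpose_mat Ptil *\<^sub>v h0) = first_cols V k *\<^sub>v x + w" using wz by simp
    moreover have "transpose_mat Ptil *\<^sub>v h0 \<in> carrier_vec d" using QR2(1) h0 by simp
    moreover have "((\<sigma> k / \<sigma> i)^(2*q+1) * c)^2 = t2^2" by (simp add: t2_def \<delta>_def)
    ultimately show "\<exists>h w. h \<in> carrier_vec d \<and> w \<in> carrier_vec n \<and> P *\<^sub>v h = first_cols V k *\<^sub>v x + w \<and>
                (first_cols V k *\<^sub>v x) \<bullet> w = 0 \<and> w \<bullet> w \<le> t2^2 * (x \<bullet> x)"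
      using w wo wb by metis
  qed
  have T2: "cos (\<phi> i) \<ge> 1 / sqrt (1 + t2^2) \<and> tan (\<phi> i) \<le> t2"
    using trig_bound[OF _ _ t2 sin2] ph_ang by auto
  have sq1: "t1^2 = \<delta> ^ (4*q+4) * c\<^sup>2"
  proof -
    have "(\<delta>^(2*q+2))^2 = \<delta>^((2*q+2)*2)" by (rule power_mult[symmetric])
    also have "(2*q+2)*2 = 4*q+4" by simp
    finally show ?thesis by (simp add: t1_def power_mult_distrib)
  qed
  have sq2: "t2^2 = \<delta> ^ (4*q+2) * c\<^sup>2"
  proof -
    have "(\<delta>^(2*q+1))^2 = \<delta>^((2*q+1)*2)" by (rule power_mult[symmetric])
    also have "(2*q+1)*2 = 4*q+2" by simp
    finally show ?thesis by (simp add: t2_def power_mult_distrib)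
  qed
  show "let \<delta> = \<sigma> k / \<sigma> i;
          c = spec_norm (transpose_mat (last_cols U k) * \<Phi> *
                          pinv (transpose_mat (first_cols U k) * \<Phi>))
      in cos (\<theta> i) \<ge> 1 / sqrt (1 + \<delta> ^ (4*q+4) * c\<^sup>2) \<and>
         tan (\<theta> i) \<le> \<delta> ^ (2*q+2) * c \<and>
         cos (\<phi> i) \<ge> 1 / sqrt (1 + \<delta> ^ (4*q+2) * c\<^sup>2) \<and>
         tan (\<phi> i) \<le> \<delta> ^ (2*q+1) * c"
    using T1 T2 sq1 sq2 pG unfolding Let_def \<delta>_def c_def t1_def t2_def F1_def by simp
qed

end
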